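(* Let $\alpha\in(0,\pi/2)$ with $\alpha\ne\pi/4$. The system $\{v_{nk}^0\}_{n\in\mathbb N,\,k=1,\dots,4}$ defined by $$v_{n1}^0(t)=\begin{bmatrix}-\tfrac12\tan2\alpha\,\cos(n-1+\tfrac\alpha\pi)t\\ \sin(n-1+\tfrac\alpha\pi)t\end{bmatrix},\quad v_{n2}^0(t)=\begin{bmatrix}\tfrac12\tan2\alpha\,\cos(n-\tfrac\alpha\pi)t\\ \sin(n-\tfrac\alpha\pi)t\end{bmatrix},$$ $$v_{n3}^0(t)=\begin{bmatrix}0\\ \sin(n-\tfrac12)t\end{bmatrix},\quad v_{n4}^0(t)=\begin{bmatrix}0\\ \sin nt\end{bmatrix},\qquad n\in\mathbb N,$$ is a Riesz basis in the real Hilbert space $\mathcal H=L_2(0,2\pi)\oplus L_2(0,2\pi)$.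
   Context: In the paper $\alpha=\arccos\sqrt{p/m}$ with integers $2\le p\le m-2$, $2p\ne m$, which gives $\alpha\in(0,\pi/2)\setminus\{\pi/4\}$. $\mathcal H$ has inner product $(g,h)_{\mathcal H}=\int_0^{2\pi}(g_1h_1+g_2h_2)\,dt$. *)

theory Defs
  imports "HOL-Analysis.Analysis"
begin

definition sq_int :: "(real \<Rightarrow> real) \<Rightarrow> bool" where
  "sq_int f \<longleftrightarrow> set_borel_measurable lebesgue {0..2*pi} f \<and>
     set_integrable lebesgue {0..2*pi} (\<lambda>t. (f t)\<^sup>2)"

definition inH :: "(real \<Rightarrow> real \<times> real) \<Rightarrow> bool" where
  "inH f \<longleftrightarrow> sq_int (\<lambda>t. fst (f t)) \<and> sq_int (\<lambda>t. snd (f t))"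

definition Hnorm2 :: "(real \<Rightarrow> real \<times> real) \<Rightarrow> real" where
  "Hnorm2 f = (LINT t:{0..2*pi}|lebesgue. (fst (f t))\<^sup>2 + (snd (f t))\<^sup>2)"

definition riesz_basis_H :: "'i set \<Rightarrow> ('i \<Rightarrow> real \<Rightarrow> real \<times> real) \<Rightarrow> bool" where
  "riesz_basis_H I e \<longleftrightarrow>
     (\<forall>i\<in>I. inH (e i)) \<and>
     (\<forall>h. inH h \<longrightarrow> (\<forall>\<epsilon>>0. \<exists>F c. finite F \<and> F \<subseteq> I \<and>
          Hnorm2 (\<lambda>t. h t - (\<Sum>i\<in>F. c i *\<^sub>R e i t)) < \<epsilon>)) \<and>
     (\<exists>A B. 0 < A \<and> 0 < B \<and>
        (\<forall>F c. finite F \<longrightarrow> F \<subseteq> I \<longrightarrow>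
           A * (\<Sum>i\<in>F. (c i)\<^sup>2) \<le> Hnorm2 (\<lambda>t. \<Sum>i\<in>F. c i *\<^sub>R e i t) \<and>
           Hnorm2 (\<lambda>t. \<Sum>i\<in>F. c i *\<^sub>R e i t) \<le> B * (\<Sum>i\<in>F. (c i)\<^sup>2)))"

definition v0 :: "real \<Rightarrow> nat \<times> nat \<Rightarrow> real \<Rightarrow> real \<times> real" where
  "v0 \<alpha> nk t = (let n = real (fst nk); k = snd nk in
     if k = 1 then (- (1/2) * tan (2*\<alpha>) * cos ((n - 1 + \<alpha>/pi) * t), sin ((n - 1 + \<alpha>/pi) * t))
     else if k = 2 then ((1/2) * tan (2*\<alpha>) * cos ((n - \<alpha>/pi) * t), sin ((n - \<alpha>/pi) * t))
     else if k = 3 then (0, sin ((n - 1/2) * t))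
     else (0, sin (n * t)))"

end

theory Submission
  imports Defs
begin
lemma int_cos_half:
  fixes j :: int
  shows "integral {0..2*pi} (\<lambda>t. cos (real_of_int j / 2 * t)) = (if j = 0 then 2*pi else 0)"
proof (cases "j = 0")
  case True then show ?thesis by simp
next
  case False
  define w where "w = real_of_int j / 2"
  have w0: "w \<noteq> 0" using False by (simp add: w_def)
  have "((\<lambda>t. cos (w * t)) has_integral (sin (w * (2*pi)) / w - sin (w * 0) / w)) {0..2*pi}"
  proof (rule fundamental_theorem_of_calculus)
    show "0 \<le> 2*pi" by simp
    fix x assume "x \<in> {0..2*pi}"
    have "((\<lambda>t. sin (w * t) / w) has_real_derivative cos (w * x)) (at x)"
      by (rule derivative_eq_intros refl | simp add: w0)+
    then show "((\<lambda>t. sin (w * t) / w) has_vector_derivative cos (w * x)) (at x within {0..2*pi})"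
      by (simp add: has_real_derivative_iff_has_vector_derivative has_vector_derivative_at_within)
  qed
  moreover have "sin (w * (2*pi)) = 0"
  proof -
    have "w * (2*pi) = real_of_int j * pi" by (simp add: w_def)
    then show ?thesis by (metis sin_times_pi_eq_0 Ints_of_int)
  qed
  ultimately show ?thesis using False by (simp add: w_def integral_unique)
qed

lemma int_cos_Ints:
  assumes "d \<in> \<int>"
  shows "integral {0..2*pi} (\<lambda>t. cos (d * t)) = (if d = 0 then 2*pi else 0)"
proof -
  obtain j where j: "d = real_of_int j" using assms Ints_cases by blast
  have "d = real_of_int (2*j) / 2" using j by simp
  then show ?thesis using int_cos_half[of "2*j"] j by simp
qed

lemma cos_integrable: "(\<lambda>t. cos (d * t)) integrable_on {0..2*pi}"
  by (rule integrable_continuous_interval) (intro continuous_intros)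

lemma integral_double_sum:
  fixes g :: "'i \<Rightarrow> 'i \<Rightarrow> real \<Rightarrow> real"
  assumes G: "finite G" and int: "\<And>i l. i \<in> G \<Longrightarrow> l \<in> G \<Longrightarrow> (g i l) integrable_on S"
  shows "integral S (\<lambda>t. \<Sum>i\<in>G. \<Sum>l\<in>G. c i l * g i l t) = (\<Sum>i\<in>G. \<Sum>l\<in>G. c i l * integral S (g i l))"
proof -
  have i1: "(\<lambda>t. c i l * g i l t) integrable_on S" if "i \<in> G" "l \<in> G" for i l
    using integrable_on_cmult_left[OF int[OF that], of "c i l"] by simp
  have i2: "(\<lambda>t. \<Sum>l\<in>G. c i l * g i l t) integrable_on S" if "i \<in> G" for i
    by (rule integrable_sum[OF G]) (use i1 that in auto)
  have "integral S (\<lambda>t. \<Sum>i\<in>G. \<Sum>l\<in>G. c i l * g i l t) = (\<Sum>i\<in>G. integral S (\<lambda>t. \<Sum>l\<in>G. c i l * g i l t))"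
    by (rule integral_sum[OF G]) (use i2 in auto)
  also have "\<dots> = (\<Sum>i\<in>G. \<Sum>l\<in>G. integral S (\<lambda>t. c i l * g i l t))"
    by (intro sum.cong refl integral_sum[OF G]) (use i1 in auto)
  also have "\<dots> = (\<Sum>i\<in>G. \<Sum>l\<in>G. c i l * integral S (g i l))"
    by (intro sum.cong refl) (metis int integral_mult)
  finally show ?thesis .
qed

lemma ortho_exp:
  fixes G :: "'i set" and z :: "'i \<Rightarrow> real" and nu :: "'i \<Rightarrow> real"
  assumes G: "finite G" and inj: "inj_on nu G" and Z: "\<And>i l. i \<in> G \<Longrightarrow> l \<in> G \<Longrightarrow> nu i - nu l \<in> \<int>"
  shows "integral {0..2*pi} (\<lambda>t. (\<Sum>i\<in>G. z i * cos (nu i * t))\<^sup>2 + (\<Sum>i\<in>G. z i * sin (nu i * t))\<^sup>2)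
         = 2*pi * (\<Sum>i\<in>G. (z i)\<^sup>2)"
proof -
  have pw: "(\<Sum>i\<in>G. z i * cos (nu i * t))\<^sup>2 + (\<Sum>i\<in>G. z i * sin (nu i * t))\<^sup>2
      = (\<Sum>i\<in>G. \<Sum>l\<in>G. z i * z l * cos ((nu i - nu l) * t))" for t
  proof -
    have "(\<Sum>i\<in>G. z i * cos (nu i * t))\<^sup>2 + (\<Sum>i\<in>G. z i * sin (nu i * t))\<^sup>2
       = (\<Sum>i\<in>G. \<Sum>l\<in>G. (z i * cos (nu i * t)) * (z l * cos (nu l * t)))
       + (\<Sum>i\<in>G. \<Sum>l\<in>G. (z i * sin (nu i * t)) * (z l * sin (nu l * t)))"
      by (simp add: power2_eq_square sum_product)
    also have "\<dots> = (\<Sum>i\<in>G. \<Sum>l\<in>G. z i * z l * cos ((nu i - nu l) * t))"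
      by (simp only: sum.distrib[symmetric]) (intro sum.cong refl, simp only: left_diff_distrib cos_diff, simp add: algebra_simps)
    finally show ?thesis .
  qed
  have "integral {0..2*pi} (\<lambda>t. \<Sum>i\<in>G. \<Sum>l\<in>G. z i * z l * cos ((nu i - nu l) * t))
     = (\<Sum>i\<in>G. \<Sum>l\<in>G. z i * z l * integral {0..2*pi} (\<lambda>t. cos ((nu i - nu l) * t)))"
    by (rule integral_double_sum[OF G cos_integrable])
  also have "\<dots> = (\<Sum>i\<in>G. \<Sum>l\<in>G. z i * z l * (if i = l then 2*pi else 0))"
  proof (intro sum.cong refl)
    fix i l assume "i \<in> G" "l \<in> G"
    then have "(nu i - nu l = 0) = (i = l)" using inj by (auto dest: inj_onD)
    then show "z i * z l * integral {0..2*pi} (\<lambda>t. cos ((nu i - nu l) * t)) = z i * z l * (if i = l then 2*pi else 0)"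
      using int_cos_Ints[OF Z[OF \<open>i\<in>G\<close> \<open>l\<in>G\<close>]] by simp
  qed
  also have "\<dots> = 2*pi * (\<Sum>i\<in>G. (z i)\<^sup>2)"
  proof -
    have "(\<Sum>l\<in>G. z i * z l * (if i = l then 2*pi else 0)) = 2*pi * (z i)\<^sup>2" if "i \<in> G" for i
    proof -
      have "(\<Sum>l\<in>G. z i * z l * (if i = l then 2*pi else 0)) = (\<Sum>l\<in>G. if i = l then z i * z l * 2*pi else 0)"
        by (intro sum.cong) auto
      then show ?thesis using that G by (simp add: power2_eq_square)
    qed
    then show ?thesis by (simp add: sum_distrib_left)
  qed
  finally show ?thesis by (simp only: pw)
qed

lemma sin_sin_half:
  "w * sin (real m / 2 * t) * (v * sin (real n / 2 * t))
   = w * v / 2 * (cos (real_of_int (int m - int n) / 2 * t) - cos (real_of_int (int m + int n) / 2 * t))"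
proof -
  have e1: "real_of_int (int m - int n) / 2 * t = real m / 2 * t - real n / 2 * t" by (simp add: field_simps)
  have e2: "real_of_int (int m + int n) / 2 * t = real m / 2 * t + real n / 2 * t" by (simp add: field_simps)
  show ?thesis unfolding e1 e2 cos_diff cos_add by (simp add: field_simps)
qed

lemma ortho_sin_half:
  fixes G :: "'i set" and w :: "'i \<Rightarrow> real" and m :: "'i \<Rightarrow> nat"
  assumes G: "finite G" and inj: "inj_on m G" and pos: "\<And>i. i \<in> G \<Longrightarrow> m i > 0"
  shows "integral {0..2*pi} (\<lambda>t. (\<Sum>i\<in>G. w i * sin (real (m i) / 2 * t))\<^sup>2) = pi * (\<Sum>i\<in>G. (w i)\<^sup>2)"
proof -
  have pw: "(\<Sum>i\<in>G. w i * sin (real (m i) / 2 * t))\<^sup>2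
      = (\<Sum>i\<in>G. \<Sum>l\<in>G. w i * w l / 2 * (cos (real_of_int (int (m i) - int (m l)) / 2 * t)
              - cos (real_of_int (int (m i) + int (m l)) / 2 * t)))" for t
  proof -
    have "(\<Sum>i\<in>G. w i * sin (real (m i) / 2 * t))\<^sup>2
       = (\<Sum>i\<in>G. \<Sum>l\<in>G. (w i * sin (real (m i) / 2 * t)) * (w l * sin (real (m l) / 2 * t)))"
      by (simp add: power2_eq_square sum_product)
    also have "\<dots> = (\<Sum>i\<in>G. \<Sum>l\<in>G. w i * w l / 2 * (cos (real_of_int (int (m i) - int (m l)) / 2 * t)
              - cos (real_of_int (int (m i) + int (m l)) / 2 * t)))"
      by (intro sum.cong refl sin_sin_half)
    finally show ?thesis .
  qed
  have "integral {0..2*pi} (\<lambda>t. \<Sum>i\<in>G. \<Sum>l\<in>G. w i * w l / 2 * (cos (real_of_int (int (m i) - int (m l)) / 2 * t)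
              - cos (real_of_int (int (m i) + int (m l)) / 2 * t)))
     = (\<Sum>i\<in>G. \<Sum>l\<in>G. w i * w l / 2 * (integral {0..2*pi} (\<lambda>t. cos (real_of_int (int (m i) - int (m l)) / 2 * t))
              - integral {0..2*pi} (\<lambda>t. cos (real_of_int (int (m i) + int (m l)) / 2 * t))))"
  proof -
    have "integral {0..2*pi} (\<lambda>t. \<Sum>i\<in>G. \<Sum>l\<in>G. w i * w l / 2 * (cos (real_of_int (int (m i) - int (m l)) / 2 * t)
              - cos (real_of_int (int (m i) + int (m l)) / 2 * t)))
      = (\<Sum>i\<in>G. \<Sum>l\<in>G. w i * w l / 2 * integral {0..2*pi} (\<lambda>t. cos (real_of_int (int (m i) - int (m l)) / 2 * t)
              - cos (real_of_int (int (m i) + int (m l)) / 2 * t)))"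
      by (rule integral_double_sum[OF G, where g = "\<lambda>i l t. cos (real_of_int (int (m i) - int (m l)) / 2 * t)
              - cos (real_of_int (int (m i) + int (m l)) / 2 * t)"]) (intro integrable_diff cos_integrable)
    also have "\<dots> = (\<Sum>i\<in>G. \<Sum>l\<in>G. w i * w l / 2 * (integral {0..2*pi} (\<lambda>t. cos (real_of_int (int (m i) - int (m l)) / 2 * t))
              - integral {0..2*pi} (\<lambda>t. cos (real_of_int (int (m i) + int (m l)) / 2 * t))))"
      by (intro sum.cong refl arg_cong2[where f="(*)"] integral_diff cos_integrable)
    finally show ?thesis .
  qed
  also have "\<dots> = (\<Sum>i\<in>G. \<Sum>l\<in>G. w i * w l / 2 * (if i = l then 2*pi else 0))"
  proof (intro sum.cong refl)
    fix i l assume il: "i \<in> G" "l \<in> G"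
    then have "(int (m i) - int (m l) = 0) = (i = l)" using inj by (auto dest: inj_onD)
    moreover have "int (m i) + int (m l) \<noteq> 0" using pos[OF il(1)] by simp
    ultimately show "w i * w l / 2 * (integral {0..2*pi} (\<lambda>t. cos (real_of_int (int (m i) - int (m l)) / 2 * t))
              - integral {0..2*pi} (\<lambda>t. cos (real_of_int (int (m i) + int (m l)) / 2 * t))) = w i * w l / 2 * (if i = l then 2*pi else 0)"
      by (simp only: int_cos_half) simp
  qed
  also have "\<dots> = pi * (\<Sum>i\<in>G. (w i)\<^sup>2)"
  proof -
    have "(\<Sum>l\<in>G. w i * w l / 2 * (if i = l then 2*pi else 0)) = pi * (w i)\<^sup>2" if "i \<in> G" for i
    proof -
      have "(\<Sum>l\<in>G. w i * w l / 2 * (if i = l then 2*pi else 0)) = (\<Sum>l\<in>G. if i = l then w i * w l / 2 * (2*pi) else 0)"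
        by (intro sum.cong) auto
      then show ?thesis using that G by (simp add: power2_eq_square)
    qed
    then show ?thesis by (simp add: sum_distrib_left)
  qed
  finally show ?thesis by (simp only: pw)
qed

lemma integral_reflect_ab:
  fixes g :: "real \<Rightarrow> real"
  shows "integral {a..b} (\<lambda>t. g (a + b - t)) = integral {a..b} g"
proof -
  have "integral {a..b} (\<lambda>t. g (a + b - t)) = integral {- (-a) .. - (-b)} (\<lambda>t. (\<lambda>x. g (a + b + x)) (- t))"
    by simp
  also have "\<dots> = integral {-b..-a} (\<lambda>x. g (a + b + x))"
    using Henstock_Kurzweil_Integration.integral_reflect_real[where a="-b" and b="-a" and f="\<lambda>x. g (a + b + x)"] by simp
  also have "\<dots> = integral {-b..-a} (g \<circ> (+) (a + b))" by (simp add: o_def)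
  also have "\<dots> = integral {-b + (a+b) .. -a + (a+b)} g" by (rule integral_shift_Icc_real)
  also have "\<dots> = integral {a..b} g" by (simp add: add.commute)
  finally show ?thesis .
qed

lemma LINT_cont:
  fixes f :: "real \<Rightarrow> real"
  assumes "continuous_on {a..b} f"
  shows "(LINT t:{a..b}|lebesgue. f t) = integral {a..b} f"
  using set_lebesgue_integral_eq_integral(2)[OF absolutely_integrable_continuous_real[OF assms]] .

lemma bounds_arith:
  fixes IX IY IU IV IW P Q c0 S :: real
  assumes a1: "IX = c0\<^sup>2 * IU" and a2: "IU \<ge> S\<^sup>2 / 6 * (IU + IV)" and a3: "IU + IV = 2*pi*P"
    and a4: "IU \<ge> 0" and a5: "IV \<ge> 0" and a6: "IW = pi * Q" and a7: "IY \<le> 2*IV + 2*IW"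
    and a8: "IY \<ge> IW/2 - IV" and a9: "c0 \<noteq> 0" and a10: "S \<noteq> 0" and a11: "IY \<ge> 0" and a12: "IW \<ge> 0"
  defines "k1 \<equiv> c0\<^sup>2 * S\<^sup>2 * pi / 3"
  defines "e \<equiv> min 1 (k1 / (4*pi))"
  shows "min (k1/2) (e*pi/2) * (P + Q) \<le> IX + IY" "IX + IY \<le> (2*pi*c0\<^sup>2 + 4*pi) * (P + Q)"
proof -
  have k1: "k1 > 0" using a9 a10 by (simp add: k1_def)
  have e: "e > 0" "e \<le> 1" "e \<le> k1/(4*pi)" using k1 by (auto simp: e_def)
  have Q: "Q \<ge> 0" using a6 a12 pi_gt_zero by (simp add: zero_le_mult_iff)
  have P: "P \<ge> 0" using a3 a4 a5 pi_gt_zero by (metis add_nonneg_nonneg zero_le_mult_iff mult_pos_pos zero_less_numeral not_le order.strict_iff_not)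
  have IXl: "IX \<ge> k1 * P"
  proof -
    have "c0\<^sup>2 * (S\<^sup>2 / 6 * (2*pi*P)) \<le> c0\<^sup>2 * IU" using a2 a3 by (intro mult_left_mono) auto
    then show ?thesis using a1 by (simp add: k1_def field_simps)
  qed
  have IV: "IV \<le> 2*pi*P" using a3 a4 by simp
  have s1: "IX + IY \<ge> IX + e * IY" using e a11 by (simp add: mult_left_le_one_le)
  have s2: "e * IY \<ge> e * (IW/2 - IV)" using e a8 by (intro mult_left_mono) auto
  have s3: "e * (IW/2 - IV) \<ge> e * (pi*Q/2 - 2*pi*P)" using e IV a6 by (intro mult_left_mono) auto
  have L: "IX + IY \<ge> (k1 - 2*pi*e) * P + (e*pi/2) * Q"
    using s1 s2 s3 IXl by (simp add: algebra_simps)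
  have "k1 - 2*pi*e \<ge> k1/2" using e(3) pi_gt_zero by (simp add: field_simps)
  then have "(k1 - 2*pi*e) * P \<ge> min (k1/2) (e*pi/2) * P"
    using P by (meson min.cobounded1 mult_right_mono order_trans)
  moreover have "(e*pi/2) * Q \<ge> min (k1/2) (e*pi/2) * Q" using Q by (intro mult_right_mono) auto
  ultimately show "min (k1/2) (e*pi/2) * (P + Q) \<le> IX + IY" using L by (simp add: algebra_simps)
  have f0: "IX \<le> c0\<^sup>2 * (2*pi*P)" using a1 a3 a5 by (simp add: mult_left_mono)
  have f1: "IX + IY \<le> c0\<^sup>2 * (2*pi*P) + 4*pi*P + 2*pi*Q" using f0 a7 a6 IV by linarith
  have f2: "(2*pi*c0\<^sup>2 + 4*pi)*(P+Q) = c0\<^sup>2 * (2*pi*P) + 4*pi*P + 2*pi*Q + (2*pi*Q + c0\<^sup>2*(2*pi*Q))"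
    by (simp add: algebra_simps)
  have f3: "0 \<le> 2*pi*Q + c0\<^sup>2*(2*pi*Q)" using Q by simp
  show "IX + IY \<le> (2*pi*c0\<^sup>2 + 4*pi) * (P + Q)" using f1 f2 f3 by linarith
qed

lemma c0_facts:
  fixes \<alpha> :: real
  assumes "0 < \<alpha>" "\<alpha> < pi/2" "\<alpha> \<noteq> pi/4"
  shows "sin (2*\<alpha>) > 0" "cos (2*\<alpha>) \<noteq> 0" "tan (2*\<alpha>) \<noteq> 0"
proof -
  show s: "sin (2*\<alpha>) > 0" using assms by (intro sin_gt_zero) auto
  show c: "cos (2*\<alpha>) \<noteq> 0"
  proof (cases "2*\<alpha> < pi/2")
    case True then show ?thesis using assms by (smt (verit) cos_gt_zero_pi)
  next
    case False
    then have "2*\<alpha> > pi/2" using assms by auto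
    then have "cos (pi - 2*\<alpha>) > 0" using assms by (intro cos_gt_zero_pi) auto
    then show ?thesis by simp
  qed
  show "tan (2*\<alpha>) \<noteq> 0" using s c by (simp add: tan_def)
qed

lemma pw_ineq:
  fixes C S u w :: real
  assumes "C\<^sup>2 + S\<^sup>2 = 1"
  shows "S\<^sup>2 / 3 * (u\<^sup>2 + w\<^sup>2) \<le> u\<^sup>2 + (C*u + S*w)\<^sup>2"
proof -
  have "(S*w)\<^sup>2 \<le> 2*(C*u + S*w)\<^sup>2 + 2*(C*u)\<^sup>2"
  proof -
    have "S*w = (C*u + S*w) - C*u" by simp
    moreover have "(x - y)\<^sup>2 \<le> 2*x\<^sup>2 + 2*y\<^sup>2" for x y :: real
      using sum_squares_ge_zero[of "x+y" 0] by (simp add: power2_eq_square algebra_simps)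
    ultimately show ?thesis by metis
  qed
  moreover have "(C*u)\<^sup>2 \<le> u\<^sup>2" "(S*u)\<^sup>2 \<le> u\<^sup>2"
  proof -
    have "C\<^sup>2 \<le> 1" "S\<^sup>2 \<le> 1" using assms by (smt (verit) zero_le_power2)+
    then show "(C*u)\<^sup>2 \<le> u\<^sup>2" "(S*u)\<^sup>2 \<le> u\<^sup>2"
      by (simp_all add: power_mult_distrib mult_left_le_one_le)
  qed
  ultimately have "S\<^sup>2 * (u\<^sup>2 + w\<^sup>2) \<le> 3 * (u\<^sup>2 + (C*u + S*w)\<^sup>2)"
    apply (simp add: power_mult_distrib algebra_simps)
    using zero_le_power2[of "C*u+S*w"] by linarith
  then show ?thesis by simp
qed

definition nuf :: "real \<Rightarrow> nat \<times> nat \<Rightarrow> real" where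
  "nuf a i = a + real_of_int (if snd i = 1 then int (fst i) - 1 else - int (fst i))"
definition zf :: "(nat \<times> nat \<Rightarrow> real) \<Rightarrow> nat \<times> nat \<Rightarrow> real" where
  "zf c i = (if snd i = 1 then c i else - c i)"
definition mf :: "nat \<times> nat \<Rightarrow> nat" where
  "mf i = (if snd i = 3 then 2 * fst i - 1 else 2 * fst i)"

lemma term12:
  assumes "fst i \<ge> 1" "snd i = 1 \<or> snd i = 2"
  shows "c i *\<^sub>R v0 \<alpha> i t = (- (tan (2*\<alpha>) / 2) * (zf c i * cos (nuf (\<alpha>/pi) i * t)), zf c i * sin (nuf (\<alpha>/pi) i * t))"
proof (cases "snd i = 1")
  case True
  then show ?thesis using assms by (simp add: v0_def nuf_def zf_def Let_def algebra_simps of_nat_diff)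
next
  case False
  then have k: "snd i = 2" using assms by auto
  have e: "(real (fst i) - \<alpha>/pi) * t = - ((\<alpha>/pi - real (fst i)) * t)" by (simp add: algebra_simps)
  show ?thesis using k unfolding v0_def nuf_def zf_def Let_def
    by (simp only: e cos_minus sin_minus) (simp add: algebra_simps)
qed

lemma term34:
  assumes "fst i \<ge> 1" "snd i = 3 \<or> snd i = 4"
  shows "c i *\<^sub>R v0 \<alpha> i t = (0, c i * sin (real (mf i) / 2 * t))"
proof (cases "snd i = 3")
  case True
  have e: "real (2 * fst i - 1) / 2 * t = (real (fst i) - 1/2) * t" using assms(1) by (simp add: of_nat_diff field_simps)
  have "mf i = 2 * fst i - 1" using True by (simp add: mf_def)
  then show ?thesis using True by (simp only: e) (simp add: v0_def Let_def)
next
  case False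
  then have k: "snd i = 4" using assms by auto
  then show ?thesis by (simp add: v0_def mf_def Let_def)
qed

lemma cont_int: fixes f :: "real \<Rightarrow> real" shows "continuous_on {0..2*pi} f \<Longrightarrow> f integrable_on {0..2*pi}"
  by (rule integrable_continuous_interval)

lemma riesz_bounds:
  fixes \<alpha> :: real
  assumes "0 < \<alpha>" "\<alpha> < pi/2" "\<alpha> \<noteq> pi/4"
  shows "\<exists>A B. 0 < A \<and> 0 < B \<and>
        (\<forall>F c. finite F \<longrightarrow> F \<subseteq> {1..} \<times> {1..4} \<longrightarrow>
           A * (\<Sum>i\<in>F. (c i)\<^sup>2) \<le> Hnorm2 (\<lambda>t. \<Sum>i\<in>F. c i *\<^sub>R v0 \<alpha> i t) \<and>
           Hnorm2 (\<lambda>t. \<Sum>i\<in>F. c i *\<^sub>R v0 \<alpha> i t) \<le> B * (\<Sum>i\<in>F. (c i)\<^sup>2))"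
proof -
  define a where "a = \<alpha>/pi"
  define c0 where "c0 = tan (2*\<alpha>) / 2"
  define C where "C = cos (2*\<alpha>)"
  define S where "S = sin (2*\<alpha>)"
  define k1 where "k1 = c0\<^sup>2 * S\<^sup>2 * pi / 3"
  define e where "e = min 1 (k1 / (4*pi))"
  have c0: "c0 \<noteq> 0" using c0_facts[OF assms] by (simp add: c0_def)
  have S: "S \<noteq> 0" using c0_facts[OF assms] by (simp add: S_def)
  have CS: "C\<^sup>2 + S\<^sup>2 = 1" by (simp add: C_def S_def)
  have k1: "k1 > 0" using c0 S by (simp add: k1_def)
  have e: "e > 0" using k1 by (simp add: e_def)
  have twopia: "2*pi*a = 2*\<alpha>" by (simp add: a_def)
  show ?thesis
  proof (intro exI conjI allI impI)
    show "0 < min (k1/2) (e*pi/2)" using k1 e by simp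
    show "0 < 2*pi*c0\<^sup>2 + 4*pi" using c0 by (simp add: add_pos_nonneg)
    fix F :: "(nat \<times> nat) set" and c :: "nat \<times> nat \<Rightarrow> real"
    assume F: "finite F" and FI: "F \<subseteq> {1..} \<times> {1..4}"
    define G12 where "G12 = {i\<in>F. snd i \<le> 2}"
    define G34 where "G34 = {i\<in>F. \<not> snd i \<le> 2}"
    have G12: "finite G12" using F by (simp add: G12_def)
    have G34: "finite G34" using F by (simp add: G34_def)
    have FU: "F = G12 \<union> G34" "G12 \<inter> G34 = {}" by (auto simp: G12_def G34_def)
    have G12I: "fst i \<ge> 1 \<and> (snd i = 1 \<or> snd i = 2)" if "i \<in> G12" for i
      using that FI by (auto simp: G12_def)
    have G34I: "fst i \<ge> 1 \<and> (snd i = 3 \<or> snd i = 4)" if "i \<in> G34" for i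
      using that FI by (auto simp: G34_def)
    define U where "U t = (\<Sum>i\<in>G12. zf c i * cos (nuf a i * t))" for t
    define V where "V t = (\<Sum>i\<in>G12. zf c i * sin (nuf a i * t))" for t
    define W where "W t = (\<Sum>i\<in>G34. c i * sin (real (mf i) / 2 * t))" for t
    define P where "P = (\<Sum>i\<in>G12. (zf c i)\<^sup>2)"
    define Q where "Q = (\<Sum>i\<in>G34. (c i)\<^sup>2)"
    have PQ: "(\<Sum>i\<in>F. (c i)\<^sup>2) = P + Q"
    proof -
      have "(\<Sum>i\<in>F. (c i)\<^sup>2) = (\<Sum>i\<in>G12. (c i)\<^sup>2) + Q"
        unfolding Q_def FU(1) by (rule sum.union_disjoint[OF G12 G34 FU(2)])
      moreover have "(\<Sum>i\<in>G12. (c i)\<^sup>2) = P" unfolding P_def by (intro sum.cong refl) (simp add: zf_def)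
      ultimately show ?thesis by simp
    qed
    have decomp: "(\<Sum>i\<in>F. c i *\<^sub>R v0 \<alpha> i t) = (- c0 * U t, V t + W t)" for t
    proof -
      have "(\<Sum>i\<in>F. c i *\<^sub>R v0 \<alpha> i t) = (\<Sum>i\<in>G12. c i *\<^sub>R v0 \<alpha> i t) + (\<Sum>i\<in>G34. c i *\<^sub>R v0 \<alpha> i t)"
        unfolding FU(1) by (rule sum.union_disjoint[OF G12 G34 FU(2)])
      also have "(\<Sum>i\<in>G12. c i *\<^sub>R v0 \<alpha> i t) = (\<Sum>i\<in>G12. (- c0 * (zf c i * cos (nuf a i * t)), zf c i * sin (nuf a i * t)))"
        by (intro sum.cong refl) (use G12I in \<open>simp add: term12 c0_def a_def\<close>)
      also have "(\<Sum>i\<in>G34. c i *\<^sub>R v0 \<alpha> i t) = (\<Sum>i\<in>G34. (0, c i * sin (real (mf i) / 2 * t)))"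
        by (intro sum.cong refl) (use G34I in \<open>simp add: term34\<close>)
      finally show ?thesis
        by (simp add: prod_eq_iff fst_sum snd_sum U_def V_def W_def sum_distrib_left)
    qed
    have cU: "continuous_on {0..2*pi} U" unfolding U_def by (intro continuous_intros)
    have cV: "continuous_on {0..2*pi} V" unfolding V_def by (intro continuous_intros)
    have cW: "continuous_on {0..2*pi} W" unfolding W_def by (intro continuous_intros)
    define IX where "IX = integral {0..2*pi} (\<lambda>t. (- c0 * U t)\<^sup>2)"
    define IY where "IY = integral {0..2*pi} (\<lambda>t. (V t + W t)\<^sup>2)"
    define IU where "IU = integral {0..2*pi} (\<lambda>t. (U t)\<^sup>2)"
    define IV where "IV = integral {0..2*pi} (\<lambda>t. (V t)\<^sup>2)"
    define IW where "IW = integral {0..2*pi} (\<lambda>t. (W t)\<^sup>2)"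
    have iU: "(\<lambda>t. (U t)\<^sup>2) integrable_on {0..2*pi}" by (intro cont_int continuous_intros cU)
    have iV: "(\<lambda>t. (V t)\<^sup>2) integrable_on {0..2*pi}" by (intro cont_int continuous_intros cV)
    have iW: "(\<lambda>t. (W t)\<^sup>2) integrable_on {0..2*pi}" by (intro cont_int continuous_intros cW)
    have iX: "(\<lambda>t. (- c0 * U t)\<^sup>2) integrable_on {0..2*pi}" by (intro cont_int continuous_intros cU)
    have iY: "(\<lambda>t. (V t + W t)\<^sup>2) integrable_on {0..2*pi}" by (intro cont_int continuous_intros cV cW)
    have H: "Hnorm2 (\<lambda>t. \<Sum>i\<in>F. c i *\<^sub>R v0 \<alpha> i t) = IX + IY"
    proof -
      have "Hnorm2 (\<lambda>t. \<Sum>i\<in>F. c i *\<^sub>R v0 \<alpha> i t) = (LINT t:{0..2*pi}|lebesgue. (- c0 * U t)\<^sup>2 + (V t + W t)\<^sup>2)"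
        by (simp add: Hnorm2_def decomp)
      also have "\<dots> = integral {0..2*pi} (\<lambda>t. (- c0 * U t)\<^sup>2 + (V t + W t)\<^sup>2)"
        by (rule LINT_cont) (intro continuous_intros cU cV cW)
      also have "\<dots> = IX + IY" unfolding IX_def IY_def by (rule integral_add[OF iX iY])
      finally show ?thesis .
    qed
    have a1: "IX = c0\<^sup>2 * IU"
    proof -
      have "IX = integral {0..2*pi} (\<lambda>t. c0\<^sup>2 * (U t)\<^sup>2)" unfolding IX_def by (simp add: power_mult_distrib)
      also have "\<dots> = c0\<^sup>2 * IU" unfolding IU_def by (metis integral_mult iU)
      finally show ?thesis .
    qed
    have inj: "inj_on (nuf a) G12"
    proof (rule inj_onI)
      fix i l assume il: "i \<in> G12" "l \<in> G12" "nuf a i = nuf a l"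
      then have "(if snd i = 1 then int (fst i) - 1 else - int (fst i)) = (if snd l = 1 then int (fst l) - 1 else - int (fst l))"
        by (simp add: nuf_def)
      then show "i = l" using G12I[OF il(1)] G12I[OF il(2)] by (auto simp: prod_eq_iff split: if_splits)
    qed
    have Zint: "nuf a i - nuf a l \<in> \<int>" for i l by (simp add: nuf_def)
    have a3: "IU + IV = 2*pi*P"
    proof -
      have "IU + IV = integral {0..2*pi} (\<lambda>t. (U t)\<^sup>2 + (V t)\<^sup>2)" unfolding IU_def IV_def
        by (rule integral_add[OF iU iV, symmetric])
      also have "\<dots> = 2*pi*P" unfolding U_def V_def P_def by (rule ortho_exp[OF G12 inj Zint])
      finally show ?thesis .
    qed
    have injm: "inj_on mf G34"
    proof (rule inj_onI)
      fix i l assume il: "i \<in> G34" "l \<in> G34" "mf i = mf l"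
      then show "i = l" using G34I[OF il(1)] G34I[OF il(2)] by (auto simp: prod_eq_iff mf_def split: if_splits) presburger+
    qed
    have a6: "IW = pi * Q" unfolding IW_def W_def Q_def
      by (rule ortho_sin_half[OF G34 injm]) (use G34I in \<open>fastforce simp: mf_def\<close>)
    have a4: "IU \<ge> 0" unfolding IU_def by (rule integral_nonneg[OF iU]) simp
    have a5: "IV \<ge> 0" unfolding IV_def by (rule integral_nonneg[OF iV]) simp
    have a11: "IY \<ge> 0" unfolding IY_def by (rule integral_nonneg[OF iY]) simp
    have a12: "IW \<ge> 0" unfolding IW_def by (rule integral_nonneg[OF iW]) simp
    have a7: "IY \<le> 2*IV + 2*IW"
    proof -
      have "IY \<le> integral {0..2*pi} (\<lambda>t. 2 * (V t)\<^sup>2 + 2 * (W t)\<^sup>2)" unfolding IY_def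
      proof (rule integral_le[OF iY])
        show "(\<lambda>t. 2 * (V t)\<^sup>2 + 2 * (W t)\<^sup>2) integrable_on {0..2*pi}" by (intro cont_int continuous_intros cV cW)
        fix t show "(V t + W t)\<^sup>2 \<le> 2 * (V t)\<^sup>2 + 2 * (W t)\<^sup>2"
          using sum_squares_ge_zero[of "V t - W t" 0] by (simp add: power2_eq_square algebra_simps)
      qed
      also have "\<dots> = 2*IV + 2*IW" unfolding IV_def IW_def
        by (simp add: integral_add iV iW integrable_on_cmult_left)
      finally show ?thesis .
    qed
    have a8: "IY \<ge> IW/2 - IV"
    proof -
      have "integral {0..2*pi} (\<lambda>t. (W t)\<^sup>2 / 2 - (V t)\<^sup>2) \<le> IY" unfolding IY_def
      proof (rule integral_le[OF _ iY])
        show "(\<lambda>t. (W t)\<^sup>2 / 2 - (V t)\<^sup>2) integrable_on {0..2*pi}" by (intro cont_int continuous_intros cV cW) auto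
        fix t show "(W t)\<^sup>2 / 2 - (V t)\<^sup>2 \<le> (V t + W t)\<^sup>2"
          using sum_squares_ge_zero[of "2 * V t + W t" 0] by (simp add: power2_eq_square algebra_simps)
      qed
      moreover have "integral {0..2*pi} (\<lambda>t. (W t)\<^sup>2 / 2 - (V t)\<^sup>2) = IW/2 - IV" unfolding IV_def IW_def
        by (simp add: integral_diff iV iW)
      ultimately show ?thesis by simp
    qed
    have a2: "IU \<ge> S\<^sup>2 / 6 * (IU + IV)"
    proof -
      have refl: "U (0 + 2*pi - t) = C * U t + S * V t" for t
      proof -
        have "cos (nuf a i * (0 + 2*pi - t)) = C * cos (nuf a i * t) + S * sin (nuf a i * t)" for i
        proof -
          obtain j :: int where j: "nuf a i = a + real_of_int j" by (simp add: nuf_def)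
          have "nuf a i * (0 + 2*pi - t) = (2*\<alpha> + (2*pi) * real_of_int j) - nuf a i * t"
            using twopia j by (simp add: algebra_simps)
          then show ?thesis by (simp add: cos_diff cos_add sin_add C_def S_def)
        qed
        then show ?thesis unfolding U_def V_def
          by (simp add: sum_distrib_left sum.distrib[symmetric] algebra_simps)
      qed
      have "IU = integral {0..2*pi} (\<lambda>t. (U (0 + 2*pi - t))\<^sup>2)" unfolding IU_def
        by (rule integral_reflect_ab[symmetric])
      then have "2 * IU = integral {0..2*pi} (\<lambda>t. (U t)\<^sup>2 + (C * U t + S * V t)\<^sup>2)"
        unfolding IU_def refl by (simp add: integral_add iU cont_int continuous_intros cU cV)
      moreover have "integral {0..2*pi} (\<lambda>t. S\<^sup>2 / 3 * ((U t)\<^sup>2 + (V t)\<^sup>2)) \<le> integral {0..2*pi} (\<lambda>t. (U t)\<^sup>2 + (C * U t + S * V t)\<^sup>2)"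
      proof (rule integral_le)
        show "(\<lambda>t. S\<^sup>2 / 3 * ((U t)\<^sup>2 + (V t)\<^sup>2)) integrable_on {0..2*pi}"
          by (intro cont_int continuous_intros cU cV)
        show "(\<lambda>t. (U t)\<^sup>2 + (C * U t + S * V t)\<^sup>2) integrable_on {0..2*pi}"
          by (intro cont_int continuous_intros cU cV)
        fix t show "S\<^sup>2 / 3 * ((U t)\<^sup>2 + (V t)\<^sup>2) \<le> (U t)\<^sup>2 + (C * U t + S * V t)\<^sup>2"
          by (rule pw_ineq[OF CS])
      qed
      moreover have "integral {0..2*pi} (\<lambda>t. S\<^sup>2 / 3 * ((U t)\<^sup>2 + (V t)\<^sup>2)) = S\<^sup>2 / 3 * (IU + IV)"
      proof -
        have "integral {0..2*pi} (\<lambda>t. (U t)\<^sup>2 + (V t)\<^sup>2) = IU + IV" unfolding IU_def IV_def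
          by (rule integral_add[OF iU iV])
        moreover have "integral {0..2*pi} (\<lambda>t. S\<^sup>2 / 3 * ((U t)\<^sup>2 + (V t)\<^sup>2)) = S\<^sup>2 / 3 * integral {0..2*pi} (\<lambda>t. (U t)\<^sup>2 + (V t)\<^sup>2)"
          using integral_mult[OF integrable_add[OF iU iV], of "S\<^sup>2 / 3"] by simp
        ultimately show ?thesis by simp
      qed
      ultimately have "S\<^sup>2 / 3 * (IU + IV) \<le> 2 * IU" by linarith
      then show ?thesis by (simp add: field_simps)
    qed
    note B = bounds_arith[OF a1 a2 a3 a4 a5 a6 a7 a8 c0 S a11 a12]
    show "min (k1/2) (e*pi/2) * (\<Sum>i\<in>F. (c i)\<^sup>2) \<le> Hnorm2 (\<lambda>t. \<Sum>i\<in>F. c i *\<^sub>R v0 \<alpha> i t)"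
      using B(1) unfolding H PQ k1_def e_def .
    show "Hnorm2 (\<lambda>t. \<Sum>i\<in>F. c i *\<^sub>R v0 \<alpha> i t) \<le> (2*pi*c0\<^sup>2 + 4*pi) * (\<Sum>i\<in>F. (c i)\<^sup>2)"
      using B(2) unfolding H PQ .
  qed
qed

inductive_set CP :: "real \<Rightarrow> (real \<Rightarrow> real) set" for w :: real where
  CP_cos: "(\<lambda>t. c * cos (real k * w * t)) \<in> CP w"
| CP_add: "f \<in> CP w \<Longrightarrow> g \<in> CP w \<Longrightarrow> (\<lambda>t. f t + g t) \<in> CP w"

lemma CP_cont: "f \<in> CP w \<Longrightarrow> continuous_on UNIV f"
  by (induction rule: CP.induct) (intro continuous_intros | assumption)+

lemma CP_cmul: "f \<in> CP w \<Longrightarrow> (\<lambda>t. d * f t) \<in> CP w"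
proof (induction rule: CP.induct)
  case (CP_cos c k)
  then show ?case using CP.CP_cos[where c="d*c" and k=k] by (simp add: mult.assoc)
next
  case (CP_add f g)
  then show ?case using CP.CP_add[OF CP_add.IH] by (simp add: distrib_left)
qed

lemma CP_const: "(\<lambda>t. c) \<in> CP w"
  using CP_cos[of c 0 w] by simp

lemma cos_cos_nat:
  "cos (real k * w * t) * cos (real j * w * t)
   = cos (real (k + j) * w * t) / 2 + cos (real (if j \<le> k then k - j else j - k) * w * t) / 2"
proof -
  have e: "cos (real (if j \<le> k then k - j else j - k) * w * t) = cos (real k * w * t - real j * w * t)"
  proof (cases "j \<le> k")
    case True then show ?thesis by (simp add: of_nat_diff algebra_simps)
  next
    case False
    then have "real (j - k) * w * t = - (real k * w * t - real j * w * t)" by (simp add: of_nat_diff algebra_simps)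
    then show ?thesis using False by (simp only: if_False) (metis cos_minus)
  qed
  have e2: "real (k + j) * w * t = real k * w * t + real j * w * t" by (simp add: algebra_simps)
  show ?thesis unfolding e e2 cos_add cos_diff by (simp add: field_simps)
qed

lemma CP_mult_cos: "f \<in> CP w \<Longrightarrow> (\<lambda>t. cos (real j * w * t) * f t) \<in> CP w"
proof (induction rule: CP.induct)
  case (CP_cos c k)
  have "(\<lambda>t. cos (real j * w * t) * (c * cos (real k * w * t)))
     = (\<lambda>t. (c/2) * cos (real (k + j) * w * t) + (c/2) * cos (real (if j \<le> k then k - j else j - k) * w * t))"
  proof (rule ext)
    fix t
    have "cos (real j * w * t) * (c * cos (real k * w * t)) = c * (cos (real k * w * t) * cos (real j * w * t))"
      by simp
    also have "\<dots> = (c/2) * cos (real (k + j) * w * t) + (c/2) * cos (real (if j \<le> k then k - j else j - k) * w * t)"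
      unfolding cos_cos_nat by (simp add: algebra_simps)
    finally show "cos (real j * w * t) * (c * cos (real k * w * t)) = (c/2) * cos (real (k + j) * w * t) + (c/2) * cos (real (if j \<le> k then k - j else j - k) * w * t)" .
  qed
  then show ?case by (simp only:) (rule CP.CP_add[OF CP.CP_cos CP.CP_cos])
next
  case (CP_add f g)
  then show ?case using CP.CP_add[OF CP_add.IH] by (simp add: distrib_left)
qed

lemma CP_mult: "f \<in> CP w \<Longrightarrow> g \<in> CP w \<Longrightarrow> (\<lambda>t. f t * g t) \<in> CP w"
proof (induction rule: CP.induct)
  case (CP_cos c k)
  then show ?case using CP_cmul[OF CP_mult_cos[OF CP_cos.prems, of k], of c] by (simp add: mult.assoc)
next
  case (CP_add f1 f2)
  then show ?case using CP.CP_add[OF CP_add.IH] by (simp add: distrib_right)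
qed

lemma CP_uniform:
  assumes w: "w > 0" and g: "continuous_on {0..pi/w} g" and e: "e > 0"
  shows "\<exists>P\<in>CP w. \<forall>t\<in>{0..pi/w}. \<bar>g t - P t\<bar> < e"
proof -
  interpret function_ring_on "CP w" "{0..pi/w}"
  proof
    show "compact {0..pi/w}" by simp
    show "continuous_on {0..pi/w} f" if "f \<in> CP w" for f
      using CP_cont[OF that] continuous_on_subset by blast
    show "(\<lambda>x. f x + g x) \<in> CP w" if "f \<in> CP w" "g \<in> CP w" for f g using that by (rule CP_add)
    show "(\<lambda>x. f x * g x) \<in> CP w" if "f \<in> CP w" "g \<in> CP w" for f g using that by (rule CP_mult)
    show "(\<lambda>_. c) \<in> CP w" for c by (rule CP_const)
    show "\<exists>f\<in>CP w. f x \<noteq> f y" if "x \<in> {0..pi/w}" "y \<in> {0..pi/w}" "x \<noteq> y" for x y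
    proof
      show "(\<lambda>t. 1 * cos (real 1 * w * t)) \<in> CP w" by (rule CP.CP_cos)
      have "w * x \<noteq> w * y" using that w by simp
      moreover have "0 \<le> w * x" "w * x \<le> pi" "0 \<le> w * y" "w * y \<le> pi"
        using that w by (auto simp: field_simps)
      ultimately show "1 * cos (real 1 * w * x) \<noteq> 1 * cos (real 1 * w * y)"
        using cos_inj_pi[of "w*x" "w*y"] by auto
    qed
  qed
  show ?thesis using Stone_Weierstrass_basic[OF g e] .
qed

definition L2 :: "real set \<Rightarrow> (real \<Rightarrow> real) \<Rightarrow> bool" where
  "L2 S f \<longleftrightarrow> f \<in> borel_measurable (lebesgue_on S) \<and> (\<lambda>t. (f t)\<^sup>2) integrable_on S"

lemma abs_int_imp_int: fixes f :: "real \<Rightarrow> real" shows "f absolutely_integrable_on S \<Longrightarrow> f integrable_on S"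
  by (rule set_lebesgue_integral_eq_integral(1))

lemma int_cmul: fixes f :: "real \<Rightarrow> real" shows "f integrable_on S \<Longrightarrow> (\<lambda>t. c * f t) integrable_on S"
  using integrable_on_cmult_left[of f S c] by simp

lemma bound_int:
  fixes f g :: "real \<Rightarrow> real"
  assumes "f \<in> borel_measurable (lebesgue_on S)" "S \<in> sets lebesgue" "g integrable_on S"
    "\<And>x. x \<in> S \<Longrightarrow> \<bar>f x\<bar> \<le> g x"
  shows "f integrable_on S"
  using measurable_bounded_by_integrable_imp_absolutely_integrable[of f S g] assms abs_int_imp_int by auto

lemma L2_cont: "continuous_on {a..b} f \<Longrightarrow> L2 {a..b} f"
  unfolding L2_def
  by (auto intro!: continuous_imp_measurable_on_sets_lebesgue integrable_continuous_interval continuous_intros)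

lemma L2_meas: "L2 S f \<Longrightarrow> f \<in> borel_measurable (lebesgue_on S)" by (simp add: L2_def)
lemma L2_sq: "L2 S f \<Longrightarrow> (\<lambda>t. (f t)\<^sup>2) integrable_on S" by (simp add: L2_def)

lemma L2_prod:
  assumes "S \<in> sets lebesgue" "L2 S f" "L2 S g"
  shows "(\<lambda>t. f t * g t) integrable_on S"
proof (rule bound_int[where g = "\<lambda>t. (f t)\<^sup>2 / 2 + (g t)\<^sup>2 / 2"])
  show "(\<lambda>t. f t * g t) \<in> borel_measurable (lebesgue_on S)"
    using assms by (intro borel_measurable_times L2_meas)
  show "(\<lambda>t. (f t)\<^sup>2 / 2 + (g t)\<^sup>2 / 2) integrable_on S"
  proof -
    have "(\<lambda>t. (1/2) * ((f t)\<^sup>2 + (g t)\<^sup>2)) integrable_on S"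
      by (intro int_cmul integrable_add L2_sq assms)
    then show ?thesis by (simp add: field_simps)
  qed
  fix x
  show "\<bar>f x * g x\<bar> \<le> (f x)\<^sup>2 / 2 + (g x)\<^sup>2 / 2"
    using sum_squares_ge_zero[of "\<bar>f x\<bar> - \<bar>g x\<bar>" 0]
    by (simp add: power2_eq_square algebra_simps abs_mult)
qed (use assms in auto)

lemma L2_diff:
  assumes S: "S \<in> sets lebesgue" and f: "L2 S f" and g: "L2 S g"
  shows "L2 S (\<lambda>t. f t - g t)"
  unfolding L2_def
proof
  show "(\<lambda>t. f t - g t) \<in> borel_measurable (lebesgue_on S)"
    using f g by (intro borel_measurable_diff L2_meas)
  have "(\<lambda>t. (f t)\<^sup>2 - 2 * (f t * g t) + (g t)\<^sup>2) integrable_on S"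
    using L2_sq[OF f] L2_sq[OF g] L2_prod[OF S f g]
    by (intro integrable_add integrable_diff int_cmul) auto
  then show "(\<lambda>t. (f t - g t)\<^sup>2) integrable_on S"
    by (simp add: power2_diff algebra_simps)
qed

lemma L2_cmul:
  assumes f: "L2 S f"
  shows "L2 S (\<lambda>t. c * f t)"
  unfolding L2_def
proof
  show "(\<lambda>t. c * f t) \<in> borel_measurable (lebesgue_on S)"
    using f by (intro borel_measurable_times L2_meas borel_measurable_const)
  show "(\<lambda>t. (c * f t)\<^sup>2) integrable_on S"
    using integrable_on_cmult_left[OF L2_sq[OF f], of "c\<^sup>2"] by (simp add: power_mult_distrib)
qed

lemma L2_add:
  assumes S: "S \<in> sets lebesgue" and f: "L2 S f" and g: "L2 S g"
  shows "L2 S (\<lambda>t. f t + g t)"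
  using L2_diff[OF S f L2_cmul[OF g, of "-1"]] by simp

lemma sq_tri: "((x::real) - z)\<^sup>2 \<le> 2 * (x - y)\<^sup>2 + 2 * (y - z)\<^sup>2"
  using sum_squares_ge_zero[of "x - 2*y + z" 0] by (simp add: power2_eq_square algebra_simps)

lemma L2_tri:
  assumes S: "S \<in> sets lebesgue" and f: "L2 S f" and g: "L2 S g" and h: "L2 S h"
  shows "integral S (\<lambda>t. (f t - h t)\<^sup>2) \<le> 2 * integral S (\<lambda>t. (f t - g t)\<^sup>2) + 2 * integral S (\<lambda>t. (g t - h t)\<^sup>2)"
proof -
  have i1: "(\<lambda>t. (f t - g t)\<^sup>2) integrable_on S" using L2_sq[OF L2_diff[OF S f g]] .
  have i2: "(\<lambda>t. (g t - h t)\<^sup>2) integrable_on S" using L2_sq[OF L2_diff[OF S g h]] .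
  have i3: "(\<lambda>t. (f t - h t)\<^sup>2) integrable_on S" using L2_sq[OF L2_diff[OF S f h]] .
  have "integral S (\<lambda>t. (f t - h t)\<^sup>2) \<le> integral S (\<lambda>t. 2 * (f t - g t)\<^sup>2 + 2 * (g t - h t)\<^sup>2)"
    by (rule integral_le[OF i3]) (auto intro!: integrable_add int_cmul i1 i2 sq_tri)
  also have "\<dots> = 2 * integral S (\<lambda>t. (f t - g t)\<^sup>2) + 2 * integral S (\<lambda>t. (g t - h t)\<^sup>2)"
    using i1 i2 by (simp add: integral_add int_cmul)
  finally show ?thesis .
qed

lemma L2_sq_nonneg: "L2 S f \<Longrightarrow> integral S (\<lambda>t. (f t)\<^sup>2) \<ge> 0"
  by (rule integral_nonneg[OF L2_sq]) auto

definition clip :: "real \<Rightarrow> real \<Rightarrow> real" where "clip M x = max (- M) (min M x)"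

lemma clip_bound: "M \<ge> 0 \<Longrightarrow> \<bar>clip M x\<bar> \<le> M" by (auto simp: clip_def)
lemma clip_le: "M \<ge> 0 \<Longrightarrow> \<bar>x - clip M x\<bar> \<le> \<bar>x\<bar>" by (auto simp: clip_def)
lemma clip_id: "\<bar>x\<bar> \<le> M \<Longrightarrow> clip M x = x" by (auto simp: clip_def)
lemma clip_cont: "continuous_on UNIV (clip M)" unfolding clip_def by (intro continuous_intros)
lemma clip_isCont: "isCont (clip M) x" using clip_cont continuous_on_eq_continuous_at by blast
lemma clip_meas: "f \<in> borel_measurable M' \<Longrightarrow> (\<lambda>t. clip M (f t)) \<in> borel_measurable M'"
  unfolding clip_def by (intro borel_measurable_max borel_measurable_min borel_measurable_const)

lemma ratio_lim:
  assumes r: "r > (0::real)"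
  shows "(\<lambda>n. real n * r / (1 + real n * r)) \<longlonglongrightarrow> 1"
proof -
  have "filterlim (\<lambda>n. r * real n) at_top sequentially"
    by (rule filterlim_tendsto_pos_mult_at_top[OF tendsto_const r filterlim_real_sequentially])
  then have "filterlim (\<lambda>n. 1 + real n * r) at_top sequentially"
    by (intro filterlim_tendsto_add_at_top[OF tendsto_const]) (simp add: mult.commute)
  then have "(\<lambda>n. inverse (1 + real n * r)) \<longlonglongrightarrow> 0" by (rule tendsto_inverse_0_at_top)
  then have "(\<lambda>n. 1 - inverse (1 + real n * r)) \<longlonglongrightarrow> 1 - 0" by (intro tendsto_diff tendsto_const)
  moreover have "1 - inverse (1 + real n * r) = real n * r / (1 + real n * r)" for n
  proof -
    have "1 + real n * r > 0" using r by (simp add: add_pos_nonneg)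
    then show ?thesis by (simp add: field_simps)
  qed
  ultimately show ?thesis by simp
qed

lemma trunc_approx:
  assumes S: "S \<in> sets lebesgue" and f: "L2 S f" and e: "e > 0"
  shows "\<exists>M>0. integral S (\<lambda>t. (f t - clip M (f t))\<^sup>2) < e"
proof -
  define F where "F n t = (f t - clip (real n) (f t))\<^sup>2" for n t
  have meas: "F n \<in> borel_measurable (lebesgue_on S)" for n
    unfolding F_def using L2_meas[OF f] by (intro borel_measurable_power borel_measurable_diff clip_meas)
  have le: "\<bar>F n t\<bar> \<le> (f t)\<^sup>2" for n t
  proof -
    have "\<bar>f t - clip (real n) (f t)\<bar> \<le> \<bar>f t\<bar>" by (rule clip_le) simp
    then have "\<bar>f t - clip (real n) (f t)\<bar>\<^sup>2 \<le> \<bar>f t\<bar>\<^sup>2" by (rule power_mono) simp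
    then show ?thesis by (simp add: F_def)
  qed
  have int: "F n integrable_on S" for n
    by (rule bound_int[OF meas S L2_sq[OF f] le])
  have conv: "(\<lambda>n. F n t) \<longlonglongrightarrow> 0" for t
  proof (rule tendsto_eventually)
    have "\<forall>n\<ge>nat \<lceil>\<bar>f t\<bar>\<rceil>. F n t = 0"
    proof (intro allI impI)
      fix n assume "nat \<lceil>\<bar>f t\<bar>\<rceil> \<le> n"
      then have "\<bar>f t\<bar> \<le> real n" by linarith
      then show "F n t = 0" by (simp add: F_def clip_id)
    qed
    then show "\<forall>\<^sub>F n in sequentially. F n t = 0" unfolding eventually_sequentially by blast
  qed
  have "(\<lambda>n. integral S (F n)) \<longlonglongrightarrow> integral S (\<lambda>t. 0)"
    by (rule dominated_convergence(2)[OF int L2_sq[OF f]]) (use le conv in auto)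
  then have "(\<lambda>n. integral S (F n)) \<longlonglongrightarrow> 0" by simp
  then have "\<forall>\<^sub>F n in sequentially. integral S (F n) < e" using e by (rule order_tendstoD)
  then obtain N where N: "\<And>n. n \<ge> N \<Longrightarrow> integral S (F n) < e" unfolding eventually_sequentially by blast
  show ?thesis
  proof (intro exI conjI)
    show "real (Suc N) > 0" by simp
    show "integral S (\<lambda>t. (f t - clip (real (Suc N)) (f t))\<^sup>2) < e"
      using N[of "Suc N"] unfolding F_def by simp
  qed
qed

lemma approx_bounded:
  fixes u rho :: "real \<Rightarrow> real"
  assumes L: "L > 0" and um: "u \<in> borel_measurable (lebesgue_on {0..L})" and M: "M > 0"
    and ub: "\<And>t. \<bar>u t\<bar> \<le> M"
    and rho: "continuous_on UNIV rho" and nz: "\<And>t. 0 < t \<Longrightarrow> t < L \<Longrightarrow> rho t \<noteq> 0" and e: "e > 0"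
  shows "\<exists>k. continuous_on UNIV k \<and> integral {0..L} (\<lambda>t. (u t - rho t * k t)\<^sup>2) < e"
proof -
  define S where "S = {0..L}"
  have Sl: "S \<in> sets lebesgue" by (simp add: S_def)
  have "u measurable_on S" using um by (simp add: measurable_on_iff_borel_measurable Sl S_def)
  then obtain N g where N: "negligible N" and g: "\<And>n. continuous_on UNIV (g n)"
    and gc: "\<And>x. x \<notin> N \<Longrightarrow> (\<lambda>n. g n x) \<longlonglongrightarrow> (if x \<in> S then u x else 0)"
    unfolding measurable_on_def by blast
  define kk where "kk n t = clip M (g n t) * (real n * rho t / (1 + real n * (rho t)\<^sup>2))" for n t
  have pos: "1 + real n * (rho t)\<^sup>2 > 0" for n t by (simp add: add_pos_nonneg)
  have contk: "continuous_on UNIV (kk n)" for n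
  proof -
    have c1: "continuous_on UNIV (\<lambda>t. clip M (g n t))"
      using continuous_on_compose[OF g[of n], of "clip M"] continuous_on_subset[OF clip_cont[of M], of "range (g n)"]
      by (auto simp: o_def)
    show ?thesis unfolding kk_def
      by (intro continuous_intros c1 rho) (use pos in \<open>metis less_irrefl\<close>)
  qed
  define F where "F n t = (u t - rho t * kk n t)\<^sup>2" for n t
  define S' where "S' = S - (N \<union> {0, L})"
  have negS: "negligible (N \<union> {0, L})" using N by simp
  have rk: "rho t * kk n t = clip M (g n t) * (real n * (rho t)\<^sup>2 / (1 + real n * (rho t)\<^sup>2))" for n t
    by (simp add: kk_def power2_eq_square)
  have frac: "0 \<le> real n * (rho t)\<^sup>2 / (1 + real n * (rho t)\<^sup>2)" "real n * (rho t)\<^sup>2 / (1 + real n * (rho t)\<^sup>2) \<le> 1" for n t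
    using pos[of n t] by (auto simp: field_simps)
  have bnd: "\<bar>F n t\<bar> \<le> (2*M)\<^sup>2" for n t
  proof -
    have "\<bar>rho t * kk n t\<bar> \<le> M"
    proof -
      have "\<bar>rho t * kk n t\<bar> = \<bar>clip M (g n t)\<bar> * (real n * (rho t)\<^sup>2 / (1 + real n * (rho t)\<^sup>2))"
        using frac(1)[of n t] by (simp add: rk abs_mult)
      also have "\<dots> \<le> M * 1" using frac[of n t] clip_bound[of M] M by (intro mult_mono) auto
      finally show ?thesis by simp
    qed
    then have "\<bar>u t - rho t * kk n t\<bar> \<le> 2*M" using ub[of t] by linarith
    then have "\<bar>u t - rho t * kk n t\<bar>\<^sup>2 \<le> (2*M)\<^sup>2" by (rule power_mono) simp
    then show ?thesis by (simp add: F_def)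
  qed
  have measF: "F n \<in> borel_measurable (lebesgue_on S)" for n
  proof -
    have "rho \<in> borel_measurable (lebesgue_on S)"
      using continuous_imp_measurable_on_sets_lebesgue[OF continuous_on_subset[OF rho] Sl] by simp
    moreover have "kk n \<in> borel_measurable (lebesgue_on S)"
      using continuous_imp_measurable_on_sets_lebesgue[OF continuous_on_subset[OF contk] Sl] by simp
    ultimately show ?thesis unfolding F_def using um S_def
      by (intro borel_measurable_power borel_measurable_diff borel_measurable_times) auto
  qed
  have hS: "(\<lambda>t. (2*M)\<^sup>2) integrable_on S" unfolding S_def
    by (rule integrable_continuous_interval) (rule continuous_on_const)
  have intS: "F n integrable_on S" for n by (rule bound_int[OF measF Sl hS bnd])
  have spike: "negligible {x \<in> S - S'. P x}" "negligible {x \<in> S' - S. P x}" for P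
  proof -
    show "negligible {x \<in> S - S'. P x}" by (rule negligible_subset[OF negS]) (auto simp: S'_def)
    show "negligible {x \<in> S' - S. P x}" by (rule negligible_subset[of "{}"]) (auto simp: S'_def)
  qed
  have intS': "F n integrable_on S'" for n by (rule integrable_spike_set[OF intS[of n] spike(1) spike(2)])
  have hS': "(\<lambda>t. (2*M)\<^sup>2) integrable_on S'" by (rule integrable_spike_set[OF hS spike(1) spike(2)])
  have conv: "(\<lambda>n. F n t) \<longlonglongrightarrow> 0" if t: "t \<in> S'" for t
  proof -
    have tS: "t \<in> S" "t \<notin> N" "0 < t" "t < L" using t by (auto simp: S'_def S_def)
    have r: "(rho t)\<^sup>2 > 0" using nz[OF tS(3,4)] by simp
    have "(\<lambda>n. g n t) \<longlonglongrightarrow> u t" using gc[OF tS(2)] tS(1) by simp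
    then have "(\<lambda>n. clip M (g n t)) \<longlonglongrightarrow> clip M (u t)" by (rule isCont_tendsto_compose[OF clip_isCont])
    then have "(\<lambda>n. clip M (g n t) * (real n * (rho t)\<^sup>2 / (1 + real n * (rho t)\<^sup>2))) \<longlonglongrightarrow> clip M (u t) * 1"
      by (intro tendsto_mult ratio_lim r)
    then have "(\<lambda>n. rho t * kk n t) \<longlonglongrightarrow> u t" using clip_id[OF ub[of t]] by (simp add: rk)
    then have "(\<lambda>n. (u t - rho t * kk n t)\<^sup>2) \<longlonglongrightarrow> (u t - u t)\<^sup>2"
      by (intro tendsto_intros)
    then show ?thesis by (simp add: F_def)
  qed
  have "(\<lambda>n. integral S' (F n)) \<longlonglongrightarrow> integral S' (\<lambda>t. 0)"
    by (rule dominated_convergence(2)[OF intS' hS']) (use bnd conv in auto)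
  moreover have "integral S' (F n) = integral S (F n)" for n
    by (rule integral_spike_set[OF spike(2) spike(1)])
  ultimately have "(\<lambda>n. integral S (F n)) \<longlonglongrightarrow> 0" by simp
  then have "\<forall>\<^sub>F n in sequentially. integral S (F n) < e" using e by (rule order_tendstoD)
  then obtain n where "integral S (F n) < e" unfolding eventually_sequentially by blast
  then show ?thesis using contk[of n] unfolding F_def S_def by blast
qed

lemma approx_L2:
  fixes f rho :: "real \<Rightarrow> real"
  assumes L: "L > 0" and f: "L2 {0..L} f"
    and rho: "continuous_on UNIV rho" and nz: "\<And>t. 0 < t \<Longrightarrow> t < L \<Longrightarrow> rho t \<noteq> 0" and e: "e > 0"
  shows "\<exists>k. continuous_on UNIV k \<and> integral {0..L} (\<lambda>t. (f t - rho t * k t)\<^sup>2) < e"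
proof -
  have Sl: "{0..L} \<in> sets lebesgue" by simp
  obtain M where M: "M > 0" and tM: "integral {0..L} (\<lambda>t. (f t - clip M (f t))\<^sup>2) < e/4"
    using trunc_approx[OF Sl f, of "e/4"] e by auto
  have um: "(\<lambda>t. clip M (f t)) \<in> borel_measurable (lebesgue_on {0..L})"
    by (rule clip_meas[OF L2_meas[OF f]])
  obtain k where k: "continuous_on UNIV k" and tk: "integral {0..L} (\<lambda>t. (clip M (f t) - rho t * k t)\<^sup>2) < e/4"
    using approx_bounded[OF L um M _ rho nz, of "e/4"] clip_bound[of M] M e by auto
  have L2u: "L2 {0..L} (\<lambda>t. clip M (f t))"
    unfolding L2_def
  proof
    show "(\<lambda>t. clip M (f t)) \<in> borel_measurable (lebesgue_on {0..L})" by (rule um)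
    show "(\<lambda>t. (clip M (f t))\<^sup>2) integrable_on {0..L}"
    proof (rule bound_int[OF _ Sl])
      show "(\<lambda>t. (clip M (f t))\<^sup>2) \<in> borel_measurable (lebesgue_on {0..L})" by (intro borel_measurable_power um)
      show "(\<lambda>t. M\<^sup>2) integrable_on {0..L}" by (rule integrable_continuous_interval) (rule continuous_on_const)
      fix x show "\<bar>(clip M (f x))\<^sup>2\<bar> \<le> M\<^sup>2"
        using power_mono[OF clip_bound[of M "f x"], of 2] M by (simp add: power_abs)
    qed
  qed
  have L2k: "L2 {0..L} (\<lambda>t. rho t * k t)"
    by (rule L2_cont) (intro continuous_intros continuous_on_subset[OF rho] continuous_on_subset[OF k]; simp)
  have "integral {0..L} (\<lambda>t. (f t - rho t * k t)\<^sup>2)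
      \<le> 2 * integral {0..L} (\<lambda>t. (f t - clip M (f t))\<^sup>2) + 2 * integral {0..L} (\<lambda>t. (clip M (f t) - rho t * k t)\<^sup>2)"
    by (rule L2_tri[OF Sl f L2u L2k])
  also have "\<dots> < e" using tM tk by linarith
  finally show ?thesis using k by blast
qed

lemma unif_L2:
  fixes p :: "real \<Rightarrow> real"
  assumes ab: "a \<le> b" and p: "continuous_on {a..b} p" and d: "\<And>t. t \<in> {a..b} \<Longrightarrow> \<bar>p t\<bar> \<le> d"
  shows "integral {a..b} (\<lambda>t. (p t)\<^sup>2) \<le> (b - a) * d\<^sup>2"
proof -
  have "integral {a..b} (\<lambda>t. (p t)\<^sup>2) \<le> integral {a..b} (\<lambda>t. d\<^sup>2)"
  proof (rule integral_le)
    show "(\<lambda>t. (p t)\<^sup>2) integrable_on {a..b}" by (intro integrable_continuous_interval continuous_intros p)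
    show "(\<lambda>t. d\<^sup>2) integrable_on {a..b}" by (intro integrable_continuous_interval continuous_intros)
    fix t assume "t \<in> {a..b}"
    then have "\<bar>p t\<bar>\<^sup>2 \<le> d\<^sup>2" using d by (intro power_mono) auto
    then show "(p t)\<^sup>2 \<le> d\<^sup>2" by simp
  qed
  also have "\<dots> = (b - a) * d\<^sup>2" using ab by simp
  finally show ?thesis .
qed

lemma integral_reflect_c:
  fixes g :: "real \<Rightarrow> real"
  shows "integral {a..b} (\<lambda>t. g (c - t)) = integral {c - b..c - a} g"
proof -
  have "integral {a..b} (\<lambda>t. g (c - t)) = integral {- (-a) .. - (-b)} (\<lambda>t. (\<lambda>x. g (c + x)) (- t))"
    by simp
  also have "\<dots> = integral {-b..-a} (\<lambda>x. g (c + x))"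
    using Henstock_Kurzweil_Integration.integral_reflect_real[where a="-b" and b="-a" and f="\<lambda>x. g (c + x)"] by simp
  also have "\<dots> = integral {-b..-a} (g \<circ> (+) c)" by (simp add: o_def)
  also have "\<dots> = integral {-b + c .. -a + c} g" by (rule integral_shift_Icc_real)
  also have "\<dots> = integral {c - b..c - a} g" by (simp add: algebra_simps)
  finally show ?thesis .
qed

lemma small_sq:
  fixes e :: real
  assumes "e > 0"
  shows "\<exists>d>0. d\<^sup>2 \<le> e"
proof -
  define d where "d = min 1 e"
  have "d > 0" using assms by (auto simp: d_def)
  moreover have "d\<^sup>2 \<le> d"
  proof -
    have "d \<le> 1" by (simp add: d_def)
    then have "d * d \<le> 1 * d" using \<open>d > 0\<close> by (intro mult_right_mono) auto
    then show ?thesis by (simp add: power2_eq_square)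
  qed
  moreover have "d \<le> e" by (simp add: d_def)
  ultimately show ?thesis by force
qed

lemma sin_half_approx:
  assumes r: "L2 {0..2*pi} r" and e: "e > 0"
  shows "\<exists>R\<in>CP (1/2). integral {0..2*pi} (\<lambda>t. (r t - sin (t/2) * R t)\<^sup>2) < e"
proof -
  have Sl: "{0..2*pi} \<in> sets lebesgue" by simp
  have nz: "sin (t/2) \<noteq> 0" if "0 < t" "t < 2*pi" for t
    using sin_gt_zero[of "t/2"] that by auto
  obtain k where k: "continuous_on UNIV k" and tk: "integral {0..2*pi} (\<lambda>t. (r t - sin (t/2) * k t)\<^sup>2) < e/4"
  proof -
    have cs: "continuous_on UNIV (\<lambda>t::real. sin (t/2))" by (intro continuous_intros) auto
    show ?thesis using approx_L2[where L="2*pi" and f=r and rho="\<lambda>t. sin (t/2)" and e="e/4", OF _ r cs nz] e that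
      by auto
  qed
  obtain d where d: "d > 0" "d\<^sup>2 \<le> e / (16*pi)" using small_sq[of "e/(16*pi)"] e by auto
  have pi2: "pi / (1/2) = 2*pi" by simp
  obtain R where R: "R \<in> CP (1/2)" and uR: "\<forall>t\<in>{0..2*pi}. \<bar>k t - R t\<bar> < d"
    using CP_uniform[of "1/2" k d] continuous_on_subset[OF k] d unfolding pi2 by auto
  have cR: "continuous_on UNIV R" by (rule CP_cont[OF R])
  have "integral {0..2*pi} (\<lambda>t. (sin (t/2) * k t - sin (t/2) * R t)\<^sup>2) \<le> (2*pi - 0) * d\<^sup>2"
  proof (rule unif_L2)
    show "continuous_on {0..2*pi} (\<lambda>t. sin (t/2) * k t - sin (t/2) * R t)"
      by (intro continuous_intros continuous_on_subset[OF k] continuous_on_subset[OF cR]; simp)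
    fix t assume t: "t \<in> {0..2*pi}"
    have "\<bar>sin (t/2) * k t - sin (t/2) * R t\<bar> = \<bar>sin (t/2)\<bar> * \<bar>k t - R t\<bar>" by (simp add: abs_mult flip: right_diff_distrib)
    also have "\<dots> \<le> 1 * d" using uR t by (intro mult_mono) (auto simp: less_imp_le)
    finally show "\<bar>sin (t/2) * k t - sin (t/2) * R t\<bar> \<le> d" by simp
  qed simp
  also have "\<dots> \<le> 2*pi * (e/(16*pi))" using d by (subst diff_zero) (rule mult_left_mono, auto)
  also have "\<dots> = e/8" by simp
  finally have t2: "integral {0..2*pi} (\<lambda>t. (sin (t/2) * k t - sin (t/2) * R t)\<^sup>2) \<le> e/8" .
  have L2a: "L2 {0..2*pi} (\<lambda>t. sin (t/2) * k t)"
    by (rule L2_cont) (intro continuous_intros continuous_on_subset[OF k]; simp)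
  have L2b: "L2 {0..2*pi} (\<lambda>t. sin (t/2) * R t)"
    by (rule L2_cont) (intro continuous_intros continuous_on_subset[OF cR]; simp)
  have "integral {0..2*pi} (\<lambda>t. (r t - sin (t/2) * R t)\<^sup>2)
     \<le> 2 * integral {0..2*pi} (\<lambda>t. (r t - sin (t/2) * k t)\<^sup>2) + 2 * integral {0..2*pi} (\<lambda>t. (sin (t/2) * k t - sin (t/2) * R t)\<^sup>2)"
    by (rule L2_tri[OF Sl r L2a L2b])
  also have "\<dots> < e" using tk t2 e by linarith
  finally show ?thesis using R by blast
qed

lemma CP1_sym: "f \<in> CP 1 \<Longrightarrow> f (2*pi - t) = f t"
proof (induction rule: CP.induct)
  case (CP_cos c k)
  have "real k * 1 * (2*pi - t) = 2 * real k * pi - real k * t" by (simp add: algebra_simps)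
  then show ?case by (simp add: cos_diff)
qed simp

lemma sq_comb: "\<bar>c\<bar> \<le> 1 \<Longrightarrow> \<bar>s\<bar> \<le> 1 \<Longrightarrow> (c * x + s * (y::real))\<^sup>2 \<le> 2 * x\<^sup>2 + 2 * y\<^sup>2"
proof -
  assume c: "\<bar>c\<bar> \<le> 1" and s: "\<bar>s\<bar> \<le> 1"
  have "(c * x + s * y)\<^sup>2 \<le> 2 * (c*x)\<^sup>2 + 2 * (s*y)\<^sup>2"
    using sum_squares_ge_zero[of "c*x - s*y" 0] by (simp add: power2_eq_square algebra_simps)
  moreover have "(c*x)\<^sup>2 \<le> x\<^sup>2" "(s*y)\<^sup>2 \<le> y\<^sup>2"
  proof -
    have "\<bar>c\<bar>\<^sup>2 \<le> 1\<^sup>2" "\<bar>s\<bar>\<^sup>2 \<le> 1\<^sup>2" using c s by (intro power_mono; simp)+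
    then have "c\<^sup>2 \<le> 1" "s\<^sup>2 \<le> 1" by simp_all
    then show "(c*x)\<^sup>2 \<le> x\<^sup>2" "(s*y)\<^sup>2 \<le> y\<^sup>2" by (simp_all add: power_mult_distrib mult_left_le_one_le)
  qed
  ultimately show ?thesis by linarith
qed


lemma lin4: "(a::real) \<le> 2*x+2*y \<Longrightarrow> b \<le> 2*x+2*y \<Longrightarrow> a + b \<le> 4*(x+y)" by (simp only: distrib_left)

lemma cont_refl:
  fixes g :: "real \<Rightarrow> real"
  assumes "continuous_on UNIV g" shows "continuous_on UNIV (\<lambda>t. g (c - t))"
proof -
  have "continuous_on UNIV (\<lambda>t::real. c - t)" by (intro continuous_intros)
  then show ?thesis using continuous_on_compose[of UNIV "\<lambda>t. c - t" g] continuous_on_subset[OF assms]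
    by (auto simp: o_def)
qed

lemma cos_sys_approx:
  fixes a :: real and f :: "real \<Rightarrow> real"
  assumes Sa: "sin (2*pi*a) \<noteq> 0" and f: "L2 {0..2*pi} f" and e: "e > 0"
  shows "\<exists>P\<in>CP 1. \<exists>R\<in>CP 1. integral {0..2*pi} (\<lambda>t. (f t - (cos (a*t) * P t - sin (a*t) * (sin t * R t)))\<^sup>2) < e"
proof -
  define S where "S = sin (2*pi*a)"
  have Sl: "{0..2*pi} \<in> sets lebesgue" "{0..pi} \<in> sets lebesgue" by simp_all
  have one: "continuous_on UNIV (\<lambda>t::real. 1::real)" by simp
  obtain g where g: "continuous_on UNIV g" and tg: "integral {0..2*pi} (\<lambda>t. (f t - 1 * g t)\<^sup>2) < e/4"
    using approx_L2[where L="2*pi" and f=f and rho="\<lambda>t. 1" and e="e/4", OF _ f one] e by auto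
  define A where "A t = (sin (a*(2*pi-t)) * g t + sin (a*t) * g (2*pi - t)) / S" for t
  define B where "B t = (cos (a*t) * g (2*pi - t) - cos (a*(2*pi-t)) * g t) / S" for t
  have g2: "continuous_on UNIV (\<lambda>t. g (2*pi - t))" by (rule cont_refl[OF g])
  have cA: "continuous_on UNIV A" unfolding A_def using Sa S_def
    by (intro continuous_intros g g2) auto
  have cB: "continuous_on UNIV B" unfolding B_def using Sa S_def
    by (intro continuous_intros g g2) auto
  have addf: "sin (a*t) * cos (a*(2*pi-t)) + cos (a*t) * sin (a*(2*pi-t)) = S" for t
  proof -
    have "a*t + a*(2*pi-t) = 2*pi*a" by (simp add: algebra_simps)
    then show ?thesis using sin_add[of "a*t" "a*(2*pi-t)"] by (simp add: S_def)
  qed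
  have S0: "S \<noteq> 0" using Sa by (simp add: S_def)
  have id1: "g t = cos (a*t) * A t - sin (a*t) * B t" for t
  proof -
    have "cos (a*t) * A t - sin (a*t) * B t = g t * (sin (a*t) * cos (a*(2*pi-t)) + cos (a*t) * sin (a*(2*pi-t))) / S"
      unfolding A_def B_def using S0 by (simp add: field_simps)
    then show ?thesis using addf[of t] S0 by simp
  qed
  have id2: "g (2*pi - t) = cos (a*(2*pi-t)) * A t + sin (a*(2*pi-t)) * B t" for t
  proof -
    have "cos (a*(2*pi-t)) * A t + sin (a*(2*pi-t)) * B t = g (2*pi - t) * (sin (a*t) * cos (a*(2*pi-t)) + cos (a*t) * sin (a*(2*pi-t))) / S"
      unfolding A_def B_def using S0 by (simp add: field_simps)
    then show ?thesis using addf[of t] S0 by simp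
  qed
  obtain d where d: "d > 0" "d\<^sup>2 \<le> e / (192*pi)" using small_sq[of "e/(192*pi)"] e by auto
  have pi1: "pi / 1 = pi" by simp
  obtain P where P: "P \<in> CP 1" and uP: "\<forall>t\<in>{0..pi}. \<bar>A t - P t\<bar> < d"
    using CP_uniform[of 1 A d] continuous_on_subset[OF cA] d unfolding pi1 by auto
  have sinnz: "sin t \<noteq> 0" if "0 < t" "t < pi" for t using sin_gt_zero[of t] that by auto
  have csin: "continuous_on UNIV (\<lambda>t::real. sin t)" by (intro continuous_intros)
  have L2B: "L2 {0..pi} B" by (rule L2_cont) (rule continuous_on_subset[OF cB], simp)
  obtain k where k: "continuous_on UNIV k" and tk: "integral {0..pi} (\<lambda>t. (B t - sin t * k t)\<^sup>2) < e/64"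
    using approx_L2[where L="pi" and f=B and rho="\<lambda>t. sin t" and e="e/64", OF _ L2B csin sinnz] e by auto
  obtain R where R: "R \<in> CP 1" and uR: "\<forall>t\<in>{0..pi}. \<bar>k t - R t\<bar> < d"
    using CP_uniform[of 1 k d] continuous_on_subset[OF k] d unfolding pi1 by auto
  have cP: "continuous_on UNIV P" by (rule CP_cont[OF P])
  have cR: "continuous_on UNIV R" by (rule CP_cont[OF R])
  define Q where "Q t = sin t * R t" for t
  have cQ: "continuous_on UNIV Q" unfolding Q_def by (intro continuous_intros cR)
  have tA: "integral {0..pi} (\<lambda>t. (A t - P t)\<^sup>2) \<le> pi * d\<^sup>2"
  proof -
    have "integral {0..pi} (\<lambda>t. (A t - P t)\<^sup>2) \<le> (pi - 0) * d\<^sup>2"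
    proof (rule unif_L2)
      show "continuous_on {0..pi} (\<lambda>t. A t - P t)"
        by (intro continuous_intros continuous_on_subset[OF cA] continuous_on_subset[OF cP]; simp)
      fix t assume "t \<in> {0..pi}" then show "\<bar>A t - P t\<bar> \<le> d" using uP by (auto intro: less_imp_le)
    qed simp
    then show ?thesis by simp
  qed
  have tB: "integral {0..pi} (\<lambda>t. (B t - Q t)\<^sup>2) \<le> 2 * (e/64) + 2 * (pi * d\<^sup>2)"
  proof -
    have L2a: "L2 {0..pi} (\<lambda>t. sin t * k t)"
      by (rule L2_cont) (intro continuous_intros continuous_on_subset[OF k]; simp)
    have L2b: "L2 {0..pi} Q" by (rule L2_cont) (rule continuous_on_subset[OF cQ], simp)
    have "integral {0..pi} (\<lambda>t. (sin t * k t - Q t)\<^sup>2) \<le> (pi - 0) * d\<^sup>2"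
    proof (rule unif_L2)
      show "continuous_on {0..pi} (\<lambda>t. sin t * k t - Q t)"
        by (intro continuous_intros continuous_on_subset[OF k] continuous_on_subset[OF cQ]; simp)
      fix t assume t: "t \<in> {0..pi}"
      have "\<bar>sin t * k t - Q t\<bar> = \<bar>sin t\<bar> * \<bar>k t - R t\<bar>" by (simp add: Q_def abs_mult flip: right_diff_distrib)
      also have "\<dots> \<le> 1 * d" using uR t by (intro mult_mono) (auto simp: less_imp_le)
      finally show "\<bar>sin t * k t - Q t\<bar> \<le> d" by simp
    qed simp
    moreover have "integral {0..pi} (\<lambda>t. (B t - Q t)\<^sup>2)
        \<le> 2 * integral {0..pi} (\<lambda>t. (B t - sin t * k t)\<^sup>2) + 2 * integral {0..pi} (\<lambda>t. (sin t * k t - Q t)\<^sup>2)"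
      by (rule L2_tri[OF Sl(2) L2B L2a L2b])
    ultimately show ?thesis using tk by simp
  qed
  define Phi where "Phi t = cos (a*t) * P t - sin (a*t) * Q t" for t
  define E where "E t = g t - Phi t" for t
  have cE: "continuous_on UNIV E" unfolding E_def Phi_def by (intro continuous_intros g cP cQ)
  have E1: "E t = cos (a*t) * (A t - P t) + (- sin (a*t)) * (B t - Q t)" for t
    unfolding E_def Phi_def by (subst id1) (simp add: algebra_simps)
  have E2: "E (2*pi - t) = cos (a*(2*pi-t)) * (A t - P t) + sin (a*(2*pi-t)) * (B t - Q t)" for t
  proof -
    have "P (2*pi - t) = P t" by (rule CP1_sym[OF P])
    moreover have "Q (2*pi - t) = - Q t" unfolding Q_def using CP1_sym[OF R] by simp
    ultimately show ?thesis unfolding E_def Phi_def by (subst id2) (simp add: algebra_simps)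
  qed
  have pwE: "(E t)\<^sup>2 + (E (2*pi - t))\<^sup>2 \<le> 4 * ((A t - P t)\<^sup>2 + (B t - Q t)\<^sup>2)" for t
  proof -
    have "(E t)\<^sup>2 \<le> 2 * (A t - P t)\<^sup>2 + 2 * (B t - Q t)\<^sup>2"
      unfolding E1[of t] by (rule sq_comb) auto
    moreover have "(E (2*pi - t))\<^sup>2 \<le> 2 * (A t - P t)\<^sup>2 + 2 * (B t - Q t)\<^sup>2"
      unfolding E2[of t] by (rule sq_comb) auto
    ultimately show ?thesis by (rule lin4)
  qed
  have cint: "h integrable_on {a'..b'}" if "continuous_on UNIV h" for h :: "real \<Rightarrow> real" and a' b'
    by (rule integrable_continuous_interval) (rule continuous_on_subset[OF that], simp)
  have intE: "(\<lambda>t. (E t)\<^sup>2) integrable_on {a'..b'}" for a' b'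
    by (rule cint) (intro continuous_intros cE)
  have intE2: "(\<lambda>t. (E (2*pi - t))\<^sup>2) integrable_on {0..pi}"
    by (rule cint) (intro continuous_intros cont_refl[OF cE])
  have intA: "(\<lambda>t. (A t - P t)\<^sup>2) integrable_on {0..pi}"
    by (rule cint) (intro continuous_intros cA cP)
  have intB: "(\<lambda>t. (B t - Q t)\<^sup>2) integrable_on {0..pi}"
    by (rule cint) (intro continuous_intros cB cQ)
  have intAB: "(\<lambda>t. 4 * ((A t - P t)\<^sup>2 + (B t - Q t)\<^sup>2)) integrable_on {0..pi}"
    by (rule cint) (intro continuous_intros cA cP cB cQ)
  have "integral {0..2*pi} (\<lambda>t. (E t)\<^sup>2) = integral {0..pi} (\<lambda>t. (E t)\<^sup>2) + integral {pi..2*pi} (\<lambda>t. (E t)\<^sup>2)"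
    using Henstock_Kurzweil_Integration.integral_combine[where a=0 and c=pi and b="2*pi" and f="\<lambda>t. (E t)\<^sup>2"] intE[of 0 "2*pi"] by simp
  also have "integral {pi..2*pi} (\<lambda>t. (E t)\<^sup>2) = integral {0..pi} (\<lambda>t. (E (2*pi - t))\<^sup>2)"
    using integral_reflect_c[of 0 pi "\<lambda>t. (E t)\<^sup>2" "2*pi"] by simp
  also have "integral {0..pi} (\<lambda>t. (E t)\<^sup>2) + integral {0..pi} (\<lambda>t. (E (2*pi - t))\<^sup>2)
      = integral {0..pi} (\<lambda>t. (E t)\<^sup>2 + (E (2*pi - t))\<^sup>2)"
    by (rule integral_add[symmetric, OF intE intE2])
  also have "\<dots> \<le> integral {0..pi} (\<lambda>t. 4 * ((A t - P t)\<^sup>2 + (B t - Q t)\<^sup>2))"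
    by (rule integral_le[OF integrable_add[OF intE intE2] intAB pwE])
  also have "\<dots> = 4 * (integral {0..pi} (\<lambda>t. (A t - P t)\<^sup>2) + integral {0..pi} (\<lambda>t. (B t - Q t)\<^sup>2))"
    using integral_mult[OF integrable_add[OF intA intB], of 4] integral_add[OF intA intB] by simp
  also have "\<dots> \<le> 4 * (pi * d\<^sup>2 + (2 * (e/64) + 2 * (pi * d\<^sup>2)))"
    by (intro mult_left_mono add_mono tA tB) simp
  finally have tE: "integral {0..2*pi} (\<lambda>t. (E t)\<^sup>2) \<le> 4 * (pi * d\<^sup>2 + (2 * (e/64) + 2 * (pi * d\<^sup>2)))" .
  have L2g: "L2 {0..2*pi} g" by (rule L2_cont) (rule continuous_on_subset[OF g], simp)
  have L2Phi: "L2 {0..2*pi} Phi" by (rule L2_cont)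
    (unfold Phi_def, intro continuous_intros continuous_on_subset[OF cP] continuous_on_subset[OF cQ]; simp)
  have "integral {0..2*pi} (\<lambda>t. (f t - Phi t)\<^sup>2)
     \<le> 2 * integral {0..2*pi} (\<lambda>t. (f t - g t)\<^sup>2) + 2 * integral {0..2*pi} (\<lambda>t. (g t - Phi t)\<^sup>2)"
    by (rule L2_tri[OF Sl(1) f L2g L2Phi])
  moreover have "pi * d\<^sup>2 \<le> e / 192"
    using d(2) pi_gt_zero by (simp add: field_simps)
  ultimately have "integral {0..2*pi} (\<lambda>t. (f t - Phi t)\<^sup>2) < e"
    using tg tE e unfolding E_def by simp
  then show ?thesis using P R unfolding Phi_def Q_def by blast
qed

lemma sq_int_L2: "sq_int f \<Longrightarrow> L2 {0..2*pi} f"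
  unfolding sq_int_def L2_def
proof (elim conjE, intro conjI)
  assume m: "set_borel_measurable lebesgue {0..2*pi} f" and i: "set_integrable lebesgue {0..2*pi} (\<lambda>t. (f t)\<^sup>2)"
  have ee: "(\<lambda>x. indicator {0..2*pi} x *\<^sub>R f x) = (\<lambda>x. if x \<in> {0..2*pi} then f x else 0)"
    by (rule ext) (simp only: indicator_scaleR_eq_if)
  from m have "(\<lambda>x. if x \<in> {0..2*pi} then f x else 0) \<in> borel_measurable lebesgue"
    unfolding set_borel_measurable_def ee .
  then show "f \<in> borel_measurable (lebesgue_on {0..2*pi})" by (rule borel_measurable_if_D)
  show "(\<lambda>t. (f t)\<^sup>2) integrable_on {0..2*pi}" using set_lebesgue_integral_eq_integral(1)[OF i] .
qed

lemma sq_int_cont: "continuous_on UNIV f \<Longrightarrow> sq_int (f :: real \<Rightarrow> real)"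
proof -
  assume c: "continuous_on UNIV f"
  have i1: "set_integrable lebesgue {0..2*pi} f"
    by (rule absolutely_integrable_continuous_real) (rule continuous_on_subset[OF c], simp)
  have i2: "set_integrable lebesgue {0..2*pi} (\<lambda>t. (f t)\<^sup>2)"
    by (rule absolutely_integrable_continuous_real) (intro continuous_intros continuous_on_subset[OF c], simp)
  have "set_borel_measurable lebesgue {0..2*pi} f"
    using i1 unfolding set_integrable_def set_borel_measurable_def by (rule borel_measurable_integrable)
  then show ?thesis using i2 by (simp add: sq_int_def)
qed

lemma Hnorm2_eq:
  assumes "L2 {0..2*pi} f" "L2 {0..2*pi} g"
  shows "Hnorm2 (\<lambda>t. (f t, g t)) = integral {0..2*pi} (\<lambda>t. (f t)\<^sup>2) + integral {0..2*pi} (\<lambda>t. (g t)\<^sup>2)"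
proof -
  have i: "(\<lambda>t. (f t)\<^sup>2 + (g t)\<^sup>2) integrable_on {0..2*pi}" using assms by (intro integrable_add L2_sq)
  then have "set_integrable lebesgue {0..2*pi} (\<lambda>t. (f t)\<^sup>2 + (g t)\<^sup>2)"
    by (rule nonnegative_absolutely_integrable_1) simp
  then have "Hnorm2 (\<lambda>t. (f t, g t)) = integral {0..2*pi} (\<lambda>t. (f t)\<^sup>2 + (g t)\<^sup>2)"
    unfolding Hnorm2_def by (simp add: set_lebesgue_integral_eq_integral(2))
  also have "\<dots> = integral {0..2*pi} (\<lambda>t. (f t)\<^sup>2) + integral {0..2*pi} (\<lambda>t. (g t)\<^sup>2)"
    using assms by (intro integral_add L2_sq)
  finally show ?thesis .
qed

definition combs :: "real \<Rightarrow> (real \<Rightarrow> real \<times> real) set" where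
  "combs \<alpha> = {\<phi>. \<exists>F c. finite F \<and> F \<subseteq> {1..} \<times> {1..4} \<and> \<phi> = (\<lambda>t. \<Sum>i\<in>F. c i *\<^sub>R v0 \<alpha> i t)}"

lemma combs_add:
  assumes "\<phi> \<in> combs \<alpha>" "\<psi> \<in> combs \<alpha>"
  shows "(\<lambda>t. \<phi> t + \<psi> t) \<in> combs \<alpha>"
proof -
  obtain F1 c1 where F1: "finite F1" "F1 \<subseteq> {1..} \<times> {1..4}" "\<phi> = (\<lambda>t. \<Sum>i\<in>F1. c1 i *\<^sub>R v0 \<alpha> i t)"
    using assms(1) unfolding combs_def by blast
  obtain F2 c2 where F2: "finite F2" "F2 \<subseteq> {1..} \<times> {1..4}" "\<psi> = (\<lambda>t. \<Sum>i\<in>F2. c2 i *\<^sub>R v0 \<alpha> i t)"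
    using assms(2) unfolding combs_def by blast
  define c where "c i = (if i \<in> F1 then c1 i else 0) + (if i \<in> F2 then c2 i else 0)" for i
  have fin: "finite (F1 \<union> F2)" using F1 F2 by simp
  have e1: "(\<Sum>i\<in>F1 \<union> F2. (if i \<in> F1 then c1 i else 0) *\<^sub>R v0 \<alpha> i t) = (\<Sum>i\<in>F1. c1 i *\<^sub>R v0 \<alpha> i t)" for t
  proof -
    have "(\<Sum>i\<in>F1 \<union> F2. (if i \<in> F1 then c1 i else 0) *\<^sub>R v0 \<alpha> i t) = (\<Sum>i\<in>F1 \<union> F2. if i \<in> F1 then c1 i *\<^sub>R v0 \<alpha> i t else 0)"
      by (intro sum.cong) auto
    also have "\<dots> = (\<Sum>i\<in>{i \<in> F1 \<union> F2. i \<in> F1}. c1 i *\<^sub>R v0 \<alpha> i t)" by (rule sum.inter_filter[OF fin, symmetric])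
    also have "{i \<in> F1 \<union> F2. i \<in> F1} = F1" by auto
    finally show ?thesis .
  qed
  have e2: "(\<Sum>i\<in>F1 \<union> F2. (if i \<in> F2 then c2 i else 0) *\<^sub>R v0 \<alpha> i t) = (\<Sum>i\<in>F2. c2 i *\<^sub>R v0 \<alpha> i t)" for t
  proof -
    have "(\<Sum>i\<in>F1 \<union> F2. (if i \<in> F2 then c2 i else 0) *\<^sub>R v0 \<alpha> i t) = (\<Sum>i\<in>F1 \<union> F2. if i \<in> F2 then c2 i *\<^sub>R v0 \<alpha> i t else 0)"
      by (intro sum.cong) auto
    also have "\<dots> = (\<Sum>i\<in>{i \<in> F1 \<union> F2. i \<in> F2}. c2 i *\<^sub>R v0 \<alpha> i t)" by (rule sum.inter_filter[OF fin, symmetric])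
    also have "{i \<in> F1 \<union> F2. i \<in> F2} = F2" by auto
    finally show ?thesis .
  qed
  have "(\<lambda>t. \<phi> t + \<psi> t) = (\<lambda>t. \<Sum>i\<in>F1 \<union> F2. c i *\<^sub>R v0 \<alpha> i t)"
    unfolding F1(3) F2(3) c_def by (simp only: scaleR_add_left sum.distrib e1 e2)
  moreover have "F1 \<union> F2 \<subseteq> {1..} \<times> {1..4}" using F1(2) F2(2) by (rule Un_least)
  ultimately show ?thesis unfolding combs_def
    by (intro CollectI exI[of _ "F1 \<union> F2"] exI[of _ c] conjI fin)
qed

lemma combs_scale:
  assumes "\<phi> \<in> combs \<alpha>" shows "(\<lambda>t. d *\<^sub>R \<phi> t) \<in> combs \<alpha>"
proof -
  obtain F c where F: "finite F" "F \<subseteq> {1..} \<times> {1..4}" "\<phi> = (\<lambda>t. \<Sum>i\<in>F. c i *\<^sub>R v0 \<alpha> i t)"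
    using assms unfolding combs_def by blast
  have "(\<lambda>t. d *\<^sub>R \<phi> t) = (\<lambda>t. \<Sum>i\<in>F. (d * c i) *\<^sub>R v0 \<alpha> i t)"
    unfolding F(3) by (simp add: scaleR_sum_right)
  then show ?thesis unfolding combs_def
    by (intro CollectI exI[of _ F] exI[of _ "\<lambda>i. d * c i"] conjI F(1) F(2))
qed

lemma combs_single:
  assumes "i \<in> {1..} \<times> {1..4}" shows "(\<lambda>t. v0 \<alpha> i t) \<in> combs \<alpha>"
proof -
  have "(\<lambda>t. v0 \<alpha> i t) = (\<lambda>t. \<Sum>j\<in>{i}. (\<lambda>_. 1) j *\<^sub>R v0 \<alpha> j t)" by simp
  then show ?thesis unfolding combs_def
    by (intro CollectI exI[of _ "{i}"] exI[of _ "\<lambda>_. 1::real"] conjI) (use assms in auto)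
qed

lemma combs_zero: "(\<lambda>t. 0) \<in> combs \<alpha>"
proof -
  have "(\<lambda>t. 0) = (\<lambda>t. \<Sum>i\<in>{}. (\<lambda>_. 0::real) i *\<^sub>R v0 \<alpha> i t)" by simp
  then show ?thesis unfolding combs_def
    by (intro CollectI exI[of _ "{}"] exI[of _ "\<lambda>_. 0::real"] conjI) auto
qed

lemma combs_diff: "\<phi> \<in> combs \<alpha> \<Longrightarrow> \<psi> \<in> combs \<alpha> \<Longrightarrow> (\<lambda>t. \<phi> t - \<psi> t) \<in> combs \<alpha>"
  using combs_add[of \<phi> \<alpha> "\<lambda>t. (-1) *\<^sub>R \<psi> t"] combs_scale[of \<psi> \<alpha> "-1"] by simp

lemma cos_int_comb:
  assumes c0: "tan (2*\<alpha>) \<noteq> 0"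
  shows "\<exists>\<phi>\<in>combs \<alpha>. \<forall>t. fst (\<phi> t) = cos ((\<alpha>/pi + real_of_int j) * t)"
proof (cases "j \<ge> 0")
  case True
  define i where "i = (nat j + 1, 1::nat)"
  have iI: "i \<in> {1..} \<times> {1..4}" by (simp add: i_def)
  have e: "(real (fst i) - 1 + \<alpha>/pi) * t = (\<alpha>/pi + real_of_int j) * t" for t using True by (simp add: i_def)
  have "\<forall>t. fst ((- 2 / tan (2*\<alpha>)) *\<^sub>R v0 \<alpha> i t) = cos ((\<alpha>/pi + real_of_int j) * t)"
  proof
    fix t
    have "v0 \<alpha> i t = (- (1/2) * tan (2*\<alpha>) * cos ((real (fst i) - 1 + \<alpha>/pi) * t), sin ((real (fst i) - 1 + \<alpha>/pi) * t))"
      by (simp add: v0_def i_def Let_def)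
    then show "fst ((- 2 / tan (2*\<alpha>)) *\<^sub>R v0 \<alpha> i t) = cos ((\<alpha>/pi + real_of_int j) * t)"
      using c0 by (simp only: e) simp
  qed
  then show ?thesis by (rule bexI[OF _ combs_scale[OF combs_single[OF iI]]])
next
  case False
  define n where "n = nat (- j)"
  define i where "i = (n, 2::nat)"
  have n1: "n \<ge> 1" using False by (simp add: n_def)
  have iI: "i \<in> {1..} \<times> {1..4}" using n1 by (simp add: i_def)
  have e: "(\<alpha>/pi + real_of_int j) * t = - ((real n - \<alpha>/pi) * t)" for t using False by (simp add: n_def algebra_simps)
  have "\<forall>t. fst ((2 / tan (2*\<alpha>)) *\<^sub>R v0 \<alpha> i t) = cos ((\<alpha>/pi + real_of_int j) * t)"
    using c0 by (simp add: v0_def i_def Let_def e)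
  then show ?thesis by (rule bexI[OF _ combs_scale[OF combs_single[OF iI]]])
qed

lemma CP_comb1:
  assumes c0: "tan (2*\<alpha>) \<noteq> 0"
  shows "P \<in> CP 1 \<Longrightarrow> \<exists>\<phi>\<in>combs \<alpha>. \<forall>t. fst (\<phi> t) = cos (\<alpha>/pi * t) * P t"
proof (induction rule: CP.induct)
  case (CP_cos c k)
  obtain \<phi>1 where p1: "\<phi>1 \<in> combs \<alpha>" "\<forall>t. fst (\<phi>1 t) = cos ((\<alpha>/pi + real_of_int (int k)) * t)"
    using cos_int_comb[OF c0] by blast
  obtain \<phi>2 where p2: "\<phi>2 \<in> combs \<alpha>" "\<forall>t. fst (\<phi>2 t) = cos ((\<alpha>/pi + real_of_int (- int k)) * t)"
    using cos_int_comb[OF c0] by blast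
  have "fst ((c/2) *\<^sub>R (\<phi>1 t + \<phi>2 t)) = cos (\<alpha>/pi * t) * (c * cos (real k * 1 * t))" for t
  proof -
    have "(\<alpha>/pi + real_of_int (int k)) * t = \<alpha>/pi * t + real k * t"
      "(\<alpha>/pi + real_of_int (- int k)) * t = \<alpha>/pi * t - real k * t" by (simp_all add: algebra_simps)
    then have "fst (\<phi>1 t) + fst (\<phi>2 t) = 2 * (cos (\<alpha>/pi * t) * cos (real k * t))"
      using p1(2) p2(2) by (simp only: cos_add cos_diff)
    then show ?thesis by simp
  qed
  then have "\<forall>t. fst ((c/2) *\<^sub>R (\<phi>1 t + \<phi>2 t)) = cos (\<alpha>/pi * t) * (c * cos (real k * 1 * t))" by blast
  then show ?case by (rule bexI[OF _ combs_scale[OF combs_add[OF p1(1) p2(1)]]])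
next
  case (CP_add f g)
  then obtain \<phi>1 \<phi>2 where "\<phi>1 \<in> combs \<alpha>" "\<forall>t. fst (\<phi>1 t) = cos (\<alpha>/pi * t) * f t"
    "\<phi>2 \<in> combs \<alpha>" "\<forall>t. fst (\<phi>2 t) = cos (\<alpha>/pi * t) * g t" by blast
  then show ?case using combs_add[of \<phi>1 \<alpha> \<phi>2] by (intro bexI[of _ "\<lambda>t. \<phi>1 t + \<phi>2 t"]) (auto simp: algebra_simps)
qed

lemma trig4: "sin (x::real) * (sin z * cos y) = (cos (x - y - z) - cos (x + y + z) - cos (x - y + z) + cos (x + y - z)) / 4"
proof -
  have "x - y - z = x - (y + z)" "x + y + z = x + (y + z)" "x - y + z = x - (y - z)" "x + y - z = x + (y - z)" by simp_all
  then show ?thesis by (simp only: cos_add cos_diff sin_add sin_diff) (simp add: algebra_simps)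
qed

lemma CP_comb2:
  assumes c0: "tan (2*\<alpha>) \<noteq> 0"
  shows "R \<in> CP 1 \<Longrightarrow> \<exists>\<phi>\<in>combs \<alpha>. \<forall>t. fst (\<phi> t) = sin (\<alpha>/pi * t) * (sin t * R t)"
proof (induction rule: CP.induct)
  case (CP_cos c k)
  obtain \<phi>1 where p1: "\<phi>1 \<in> combs \<alpha>" "\<forall>t. fst (\<phi>1 t) = cos ((\<alpha>/pi + real_of_int (- int k - 1)) * t)"
    using cos_int_comb[OF c0] by blast
  obtain \<phi>2 where p2: "\<phi>2 \<in> combs \<alpha>" "\<forall>t. fst (\<phi>2 t) = cos ((\<alpha>/pi + real_of_int (int k + 1)) * t)"
    using cos_int_comb[OF c0] by blast
  obtain \<phi>3 where p3: "\<phi>3 \<in> combs \<alpha>" "\<forall>t. fst (\<phi>3 t) = cos ((\<alpha>/pi + real_of_int (- int k + 1)) * t)"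
    using cos_int_comb[OF c0] by blast
  obtain \<phi>4 where p4: "\<phi>4 \<in> combs \<alpha>" "\<forall>t. fst (\<phi>4 t) = cos ((\<alpha>/pi + real_of_int (int k - 1)) * t)"
    using cos_int_comb[OF c0] by blast
  define \<phi> where "\<phi> t = (c/4) *\<^sub>R (\<phi>1 t - \<phi>2 t - \<phi>3 t + \<phi>4 t)" for t
  have mem: "\<phi> \<in> combs \<alpha>" unfolding \<phi>_def
    by (intro combs_scale combs_add combs_diff p1(1) p2(1) p3(1) p4(1))
  have "fst (\<phi> t) = sin (\<alpha>/pi * t) * (sin t * (c * cos (real k * 1 * t)))" for t
  proof -
    have e: "(\<alpha>/pi + real_of_int (- int k - 1)) * t = \<alpha>/pi * t - real k * t - t"
      "(\<alpha>/pi + real_of_int (int k + 1)) * t = \<alpha>/pi * t + real k * t + t"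
      "(\<alpha>/pi + real_of_int (- int k + 1)) * t = \<alpha>/pi * t - real k * t + t"
      "(\<alpha>/pi + real_of_int (int k - 1)) * t = \<alpha>/pi * t + real k * t - t" by (simp_all add: algebra_simps)
    have "fst (\<phi> t) = c/4 * (fst (\<phi>1 t) - fst (\<phi>2 t) - fst (\<phi>3 t) + fst (\<phi>4 t))" by (simp add: \<phi>_def)
    also have "\<dots> = c * ((cos (\<alpha>/pi * t - real k * t - t) - cos (\<alpha>/pi * t + real k * t + t)
        - cos (\<alpha>/pi * t - real k * t + t) + cos (\<alpha>/pi * t + real k * t - t)) / 4)"
      using p1(2) p2(2) p3(2) p4(2) by (simp only: e)
    also have "\<dots> = c * (sin (\<alpha>/pi * t) * (sin t * cos (real k * t)))" by (simp only: trig4)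
    finally show ?thesis by simp
  qed
  then have "\<forall>t. fst (\<phi> t) = sin (\<alpha>/pi * t) * (sin t * (c * cos (real k * 1 * t)))" by blast
  then show ?case by (rule bexI[OF _ mem])
next
  case (CP_add f g)
  then obtain \<phi>1 \<phi>2 where "\<phi>1 \<in> combs \<alpha>" "\<forall>t. fst (\<phi>1 t) = sin (\<alpha>/pi * t) * (sin t * f t)"
    "\<phi>2 \<in> combs \<alpha>" "\<forall>t. fst (\<phi>2 t) = sin (\<alpha>/pi * t) * (sin t * g t)" by blast
  then show ?case using combs_add[of \<phi>1 \<alpha> \<phi>2] by (intro bexI[of _ "\<lambda>t. \<phi>1 t + \<phi>2 t"]) (auto simp: algebra_simps)
qed

lemma half_sin_pos:
  assumes m: "m \<ge> (1::nat)"
  shows "\<exists>\<phi>\<in>combs \<alpha>. \<forall>t. \<phi> t = (0, sin (real m / 2 * t))"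
proof (cases "even m")
  case True
  define i where "i = (m div 2, 4::nat)"
  have iI: "i \<in> {1..} \<times> {1..4}" using True m by (auto simp: i_def elim!: evenE)
  have "\<forall>t. v0 \<alpha> i t = (0, sin (real m / 2 * t))"
    using True by (auto simp: v0_def i_def Let_def real_of_nat_div elim!: evenE)
  then show ?thesis by (rule bexI[OF _ combs_single[OF iI]])
next
  case False
  define i where "i = ((m + 1) div 2, 3::nat)"
  have iI: "i \<in> {1..} \<times> {1..4}" using False m by (auto simp: i_def elim!: oddE)
  have "\<forall>t. v0 \<alpha> i t = (0, sin (real m / 2 * t))"
  proof
    fix t
    obtain q where q: "m = 2*q + 1" using False oddE by blast
    have "(m + 1) div 2 = q + 1" using q by simp
    then have e: "(real (fst i) - 1/2) * t = real m / 2 * t" using q by (simp add: i_def field_simps)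
    have "v0 \<alpha> i t = (0, sin ((real (fst i) - 1/2) * t))" by (simp add: v0_def i_def Let_def)
    then show "v0 \<alpha> i t = (0, sin (real m / 2 * t))" unfolding e .
  qed
  then show ?thesis by (rule bexI[OF _ combs_single[OF iI]])
qed

lemma half_sin_int: "\<exists>\<phi>\<in>combs \<alpha>. \<forall>t. \<phi> t = (0, sin (real_of_int m / 2 * t))"
proof -
  consider "m > 0" | "m = 0" | "m < 0" by linarith
  then show ?thesis
  proof cases
    case 1
    then obtain \<phi> where "\<phi> \<in> combs \<alpha>" "\<forall>t. \<phi> t = (0, sin (real (nat m) / 2 * t))"
      using half_sin_pos[of "nat m" \<alpha>] 1 by (auto simp: Suc_le_eq)
    then show ?thesis using 1 by (intro bexI[of _ \<phi>]) auto
  next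
    case 2
    have "\<forall>t. (\<lambda>t. 0) t = (0::real, sin (real_of_int m / 2 * t))" using 2 by (simp add: zero_prod_def)
    then show ?thesis by (rule bexI[OF _ combs_zero])
  next
    case 3
    then obtain \<phi> where p: "\<phi> \<in> combs \<alpha>" "\<forall>t. \<phi> t = (0, sin (real (nat (-m)) / 2 * t))"
      using half_sin_pos[of "nat (-m)" \<alpha>] 3 by (auto simp: Suc_le_eq simp del: of_nat_nat)
    have "\<forall>t. (-1) *\<^sub>R \<phi> t = (0, sin (real_of_int m / 2 * t))"
    proof
      fix t
      have "real (nat (-m)) / 2 * t = - (real_of_int m / 2 * t)" using 3 by simp
      then show "(-1) *\<^sub>R \<phi> t = (0, sin (real_of_int m / 2 * t))" using p(2) by simp
    qed
    then show ?thesis by (rule bexI[OF _ combs_scale[OF p(1)]])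
  qed
qed

lemma CP_half_comb:
  "R \<in> CP (1/2) \<Longrightarrow> \<exists>\<phi>\<in>combs \<alpha>. \<forall>t. \<phi> t = (0, sin (t/2) * R t)"
proof (induction rule: CP.induct)
  case (CP_cos c k)
  obtain \<phi>1 where p1: "\<phi>1 \<in> combs \<alpha>" "\<forall>t. \<phi>1 t = (0, sin (real_of_int (int k + 1) / 2 * t))"
    using half_sin_int by blast
  obtain \<phi>2 where p2: "\<phi>2 \<in> combs \<alpha>" "\<forall>t. \<phi>2 t = (0, sin (real_of_int (int k - 1) / 2 * t))"
    using half_sin_int by blast
  have "\<forall>t. (c/2) *\<^sub>R (\<phi>1 t - \<phi>2 t) = (0, sin (t/2) * (c * cos (real k * (1/2) * t)))"
  proof
    fix t
    have e: "real_of_int (int k + 1) / 2 * t = t/2 + real k * (1/2) * t"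
      "real_of_int (int k - 1) / 2 * t = real k * (1/2) * t - t/2" by (simp_all add: field_simps)
    have "sin (real_of_int (int k + 1) / 2 * t) - sin (real_of_int (int k - 1) / 2 * t)
        = 2 * (sin (t/2) * cos (real k * (1/2) * t))"
      unfolding e by (simp only: sin_add sin_diff) simp
    then show "(c/2) *\<^sub>R (\<phi>1 t - \<phi>2 t) = (0, sin (t/2) * (c * cos (real k * (1/2) * t)))"
      using p1(2) p2(2) by simp
  qed
  then show ?case by (rule bexI[OF _ combs_scale[OF combs_diff[OF p1(1) p2(1)]]])
next
  case (CP_add f g)
  then obtain \<phi>1 \<phi>2 where p: "\<phi>1 \<in> combs \<alpha>" "\<forall>t. \<phi>1 t = (0, sin (t/2) * f t)"
    "\<phi>2 \<in> combs \<alpha>" "\<forall>t. \<phi>2 t = (0, sin (t/2) * g t)" by blast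
  have "\<forall>t. \<phi>1 t + \<phi>2 t = (0, sin (t/2) * (f t + g t))" using p(2,4) by (simp add: algebra_simps)
  then show ?case by (rule bexI[OF _ combs_add[OF p(1) p(3)]])
qed

lemma v0_cont: "continuous_on UNIV (\<lambda>t. fst (v0 \<alpha> i t)) \<and> continuous_on UNIV (\<lambda>t. snd (v0 \<alpha> i t))"
proof -
  consider "snd i = 1" | "snd i = 2" | "snd i = 3" | "snd i \<noteq> 1 \<and> snd i \<noteq> 2 \<and> snd i \<noteq> 3" by blast
  then show ?thesis
    by cases (simp_all add: v0_def Let_def continuous_intros)
qed

lemma v0_cont_pair: "continuous_on UNIV (v0 \<alpha> i)"
proof -
  have "continuous_on UNIV (\<lambda>t. (fst (v0 \<alpha> i t), snd (v0 \<alpha> i t)))"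
    using v0_cont[of \<alpha> i] by (intro continuous_on_Pair) auto
  then show ?thesis by simp
qed

lemma combs_cont:
  assumes "\<phi> \<in> combs \<alpha>"
  shows "continuous_on UNIV (\<lambda>t. fst (\<phi> t))" "continuous_on UNIV (\<lambda>t. snd (\<phi> t))"
proof -
  obtain F c where F: "finite F" "\<phi> = (\<lambda>t. \<Sum>i\<in>F. c i *\<^sub>R v0 \<alpha> i t)"
    using assms unfolding combs_def by blast
  show "continuous_on UNIV (\<lambda>t. fst (\<phi> t))"
    unfolding F(2) fst_sum by (intro continuous_on_sum continuous_intros v0_cont_pair)
  show "continuous_on UNIV (\<lambda>t. snd (\<phi> t))"
    unfolding F(2) snd_sum by (intro continuous_on_sum continuous_intros v0_cont_pair)
qed

theorem lemma6:
  fixes \<alpha> :: real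
  assumes "0 < \<alpha>" and "\<alpha> < pi/2" and "\<alpha> \<noteq> pi/4"
  shows "riesz_basis_H ({1..} \<times> {1..4}) (v0 \<alpha>)"
  unfolding riesz_basis_H_def
proof (intro conjI)
  show "\<forall>i\<in>{1..} \<times> {1..4}. inH (v0 \<alpha> i)"
    using v0_cont by (auto simp: inH_def intro!: sq_int_cont)
  show "\<exists>A B. 0 < A \<and> 0 < B \<and>
        (\<forall>F c. finite F \<longrightarrow> F \<subseteq> {1..} \<times> {1..4} \<longrightarrow>
           A * (\<Sum>i\<in>F. (c i)\<^sup>2) \<le> Hnorm2 (\<lambda>t. \<Sum>i\<in>F. c i *\<^sub>R v0 \<alpha> i t) \<and>
           Hnorm2 (\<lambda>t. \<Sum>i\<in>F. c i *\<^sub>R v0 \<alpha> i t) \<le> B * (\<Sum>i\<in>F. (c i)\<^sup>2))"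
    by (rule riesz_bounds[OF assms])
  show "\<forall>h. inH h \<longrightarrow> (\<forall>\<epsilon>>0. \<exists>F c. finite F \<and> F \<subseteq> {1..} \<times> {1..4} \<and>
          Hnorm2 (\<lambda>t. h t - (\<Sum>i\<in>F. c i *\<^sub>R v0 \<alpha> i t)) < \<epsilon>)"
  proof (intro allI impI)
    fix h :: "real \<Rightarrow> real \<times> real" and \<epsilon> :: real
    assume h: "inH h" and e: "\<epsilon> > 0"
    define f1 where "f1 t = fst (h t)" for t
    define f2 where "f2 t = snd (h t)" for t
    have L1: "L2 {0..2*pi} f1" using h unfolding inH_def f1_def by (intro sq_int_L2) auto
    have L2': "L2 {0..2*pi} f2" using h unfolding inH_def f2_def by (intro sq_int_L2) auto
    have c0: "tan (2*\<alpha>) \<noteq> 0" using c0_facts[OF assms] by simp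
    have Sa: "sin (2*pi*(\<alpha>/pi)) \<noteq> 0" using c0_facts[OF assms] by simp
    have Sl: "{0..2*pi} \<in> sets lebesgue" by simp
    obtain P R where P: "P \<in> CP 1" and R: "R \<in> CP 1"
      and t1: "integral {0..2*pi} (\<lambda>t. (f1 t - (cos (\<alpha>/pi * t) * P t - sin (\<alpha>/pi * t) * (sin t * R t)))\<^sup>2) < \<epsilon>/2"
      using cos_sys_approx[OF Sa L1, of "\<epsilon>/2"] e by auto
    obtain \<phi>a where pa: "\<phi>a \<in> combs \<alpha>" "\<forall>t. fst (\<phi>a t) = cos (\<alpha>/pi * t) * P t"
      using CP_comb1[OF c0 P] by blast
    obtain \<phi>b where pb: "\<phi>b \<in> combs \<alpha>" "\<forall>t. fst (\<phi>b t) = sin (\<alpha>/pi * t) * (sin t * R t)"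
      using CP_comb2[OF c0 R] by blast
    define \<phi>1 where "\<phi>1 t = \<phi>a t - \<phi>b t" for t
    have p1: "\<phi>1 \<in> combs \<alpha>" unfolding \<phi>1_def by (rule combs_diff[OF pa(1) pb(1)])
    have fst1: "fst (\<phi>1 t) = cos (\<alpha>/pi * t) * P t - sin (\<alpha>/pi * t) * (sin t * R t)" for t
      using pa(2) pb(2) by (simp add: \<phi>1_def)
    define r where "r t = f2 t - snd (\<phi>1 t)" for t
    have Lr: "L2 {0..2*pi} r" unfolding r_def
      by (rule L2_diff[OF Sl L2']) (rule L2_cont, rule continuous_on_subset[OF combs_cont(2)[OF p1]], simp)
    obtain R' where R': "R' \<in> CP (1/2)" and t2: "integral {0..2*pi} (\<lambda>t. (r t - sin (t/2) * R' t)\<^sup>2) < \<epsilon>/2"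
      using sin_half_approx[OF Lr, of "\<epsilon>/2"] e by auto
    obtain \<phi>2 where p2: "\<phi>2 \<in> combs \<alpha>" "\<forall>t. \<phi>2 t = (0, sin (t/2) * R' t)"
      using CP_half_comb[OF R'] by blast
    have "(\<lambda>t. \<phi>1 t + \<phi>2 t) \<in> combs \<alpha>" by (rule combs_add[OF p1 p2(1)])
    then obtain F c where F: "finite F" "F \<subseteq> {1..} \<times> {1..4}"
      and Fe: "(\<lambda>t. \<phi>1 t + \<phi>2 t) = (\<lambda>t. \<Sum>i\<in>F. c i *\<^sub>R v0 \<alpha> i t)"
      unfolding combs_def by blast
    have diffe: "h t - (\<Sum>i\<in>F. c i *\<^sub>R v0 \<alpha> i t)
        = (f1 t - (cos (\<alpha>/pi * t) * P t - sin (\<alpha>/pi * t) * (sin t * R t)), r t - sin (t/2) * R' t)" for t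
    proof -
      have "(\<Sum>i\<in>F. c i *\<^sub>R v0 \<alpha> i t) = \<phi>1 t + \<phi>2 t" using fun_cong[OF Fe, of t] by simp
      then show ?thesis using p2(2) fst1[of t] by (simp add: prod_eq_iff f1_def f2_def r_def)
    qed
    have La: "L2 {0..2*pi} (\<lambda>t. f1 t - (cos (\<alpha>/pi * t) * P t - sin (\<alpha>/pi * t) * (sin t * R t)))"
      by (rule L2_diff[OF Sl L1], rule L2_cont)
        (intro continuous_intros continuous_on_subset[OF CP_cont[OF P]] continuous_on_subset[OF CP_cont[OF R]]; simp)
    have Lb: "L2 {0..2*pi} (\<lambda>t. r t - sin (t/2) * R' t)"
      by (rule L2_diff[OF Sl Lr], rule L2_cont)
        (intro continuous_intros continuous_on_subset[OF CP_cont[OF R']]; simp)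
    have "Hnorm2 (\<lambda>t. h t - (\<Sum>i\<in>F. c i *\<^sub>R v0 \<alpha> i t))
        = integral {0..2*pi} (\<lambda>t. (f1 t - (cos (\<alpha>/pi * t) * P t - sin (\<alpha>/pi * t) * (sin t * R t)))\<^sup>2)
          + integral {0..2*pi} (\<lambda>t. (r t - sin (t/2) * R' t)\<^sup>2)"
      unfolding diffe by (rule Hnorm2_eq[OF La Lb])
    also have "\<dots> < \<epsilon>" using t1 t2 by simp
    finally show "\<exists>F c. finite F \<and> F \<subseteq> {1..} \<times> {1..4} \<and> Hnorm2 (\<lambda>t. h t - (\<Sum>i\<in>F. c i *\<^sub>R v0 \<alpha> i t)) < \<epsilon>"
      using F by blast
  qed
qed

end
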